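(* Let $A$ be a dg algebra over a commutative ring $k$. Any cohesive $A$-module is a retract of a free cohesive $A$-module.
   Context: For a dg object $M$, $M^\#$ denotes its underlying graded object. A right dg $A$-module $M$ is cohesive if $M^\#\cong E\otimes_{A^0}A^\#$ for a graded right $A^0$-module $E$ that is bounded and projective and finitely generated in every degree; it is a free cohesive module if moreover $E$ can be chosen free of finite rank in every degree (equivalently $M^\#$ is a free $A^\#$-module of finite rank). Retract means retract in the category of right dg $A$-modules. *)

theory Defs
  imports Main "HOL-Library.Multiset" "HOL-Library.Function_Algebras"
begin

text \<open>A graded abelian group is a family of additive subgroups G n (n :: int) of an
ambient abelian group whose sum is direct.  All structure maps are only required/used on
homogeneous elements.\<close>

definition subgrp :: "'g::ab_group_add set \<Rightarrow> bool" where
  "subgrp S \<longleftrightarrow> 0 \<in> S \<and> (\<forall>x\<in>S. \<forall>y\<in>S. x + y \<in> S \<and> - x \<in> S)"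

definition grade_indep :: "(int \<Rightarrow> 'g::ab_group_add set) \<Rightarrow> bool" where
  "grade_indep G \<longleftrightarrow> (\<forall>S c. finite S \<longrightarrow> (\<forall>n\<in>S. c n \<in> G n) \<longrightarrow> sum c S = 0
       \<longrightarrow> (\<forall>n\<in>S. c n = 0))"

definition graded_group :: "(int \<Rightarrow> 'g::ab_group_add set) \<Rightarrow> bool" where
  "graded_group G \<longleftrightarrow> (\<forall>n. subgrp (G n)) \<and> grade_indep G"

definition sgnpow :: "int \<Rightarrow> 'g::ab_group_add \<Rightarrow> 'g" where
  "sgnpow n x = (if even n then x else - x)"

definition dg_algebra ::
  "('k::comm_ring_1 \<Rightarrow> 'a::ring_1) \<Rightarrow> (int \<Rightarrow> 'a set) \<Rightarrow> ('a \<Rightarrow> 'a) \<Rightarrow> bool" where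
  "dg_algebra \<kappa> A dA \<longleftrightarrow>
     graded_group A \<and> 1 \<in> A 0 \<and>
     (\<forall>p q. \<forall>x\<in>A p. \<forall>y\<in>A q. x * y \<in> A (p + q)) \<and>
     (\<forall>c. \<kappa> c \<in> A 0) \<and> \<kappa> 1 = 1 \<and>
     (\<forall>c c'. \<kappa> (c + c') = \<kappa> c + \<kappa> c' \<and> \<kappa> (c * c') = \<kappa> c * \<kappa> c') \<and>
     (\<forall>c p. \<forall>x\<in>A p. \<kappa> c * x = x * \<kappa> c) \<and>
     (\<forall>p. \<forall>x\<in>A p. dA x \<in> A (p + 1)) \<and>
     (\<forall>p. \<forall>x\<in>A p. \<forall>y\<in>A p. dA (x + y) = dA x + dA y) \<and>
     (\<forall>c p. \<forall>x\<in>A p. dA (\<kappa> c * x) = \<kappa> c * dA x) \<and>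
     (\<forall>p. \<forall>x\<in>A p. dA (dA x) = 0) \<and>
     (\<forall>p q. \<forall>x\<in>A p. \<forall>y\<in>A q. dA (x * y) = dA x * y + sgnpow p (x * dA y))"

definition graded_rmodule ::
  "(int \<Rightarrow> 'a::ring_1 set) \<Rightarrow> (int \<Rightarrow> 'm::ab_group_add set) \<Rightarrow> ('m \<Rightarrow> 'a \<Rightarrow> 'm) \<Rightarrow> bool" where
  "graded_rmodule A M act \<longleftrightarrow>
     graded_group M \<and>
     (\<forall>n q. \<forall>m\<in>M n. \<forall>a\<in>A q. act m a \<in> M (n + q)) \<and>
     (\<forall>n q. \<forall>m\<in>M n. \<forall>m'\<in>M n. \<forall>a\<in>A q. act (m + m') a = act m a + act m' a) \<and>
     (\<forall>n q. \<forall>m\<in>M n. \<forall>a\<in>A q. \<forall>b\<in>A q. act m (a + b) = act m a + act m b) \<and>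
     (\<forall>n p q. \<forall>m\<in>M n. \<forall>a\<in>A p. \<forall>b\<in>A q. act (act m a) b = act m (a * b)) \<and>
     (\<forall>n. \<forall>m\<in>M n. act m 1 = m)"

definition dg_rmodule ::
  "(int \<Rightarrow> 'a::ring_1 set) \<Rightarrow> ('a \<Rightarrow> 'a) \<Rightarrow> (int \<Rightarrow> 'm::ab_group_add set) \<Rightarrow>
   ('m \<Rightarrow> 'a \<Rightarrow> 'm) \<Rightarrow> ('m \<Rightarrow> 'm) \<Rightarrow> bool" where
  "dg_rmodule A dA M act dM \<longleftrightarrow>
     graded_rmodule A M act \<and>
     (\<forall>n. \<forall>m\<in>M n. dM m \<in> M (n + 1)) \<and>
     (\<forall>n. \<forall>m\<in>M n. \<forall>m'\<in>M n. dM (m + m') = dM m + dM m') \<and>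
     (\<forall>n. \<forall>m\<in>M n. dM (dM m) = 0) \<and>
     (\<forall>n q. \<forall>m\<in>M n. \<forall>a\<in>A q. dM (act m a) = act (dM m) a + sgnpow n (act m (dA a)))"

definition dg_hom ::
  "(int \<Rightarrow> 'a::ring_1 set) \<Rightarrow>
   (int \<Rightarrow> 'm::ab_group_add set) \<Rightarrow> ('m \<Rightarrow> 'a \<Rightarrow> 'm) \<Rightarrow> ('m \<Rightarrow> 'm) \<Rightarrow>
   (int \<Rightarrow> 'n::ab_group_add set) \<Rightarrow> ('n \<Rightarrow> 'a \<Rightarrow> 'n) \<Rightarrow> ('n \<Rightarrow> 'n) \<Rightarrow> ('m \<Rightarrow> 'n) \<Rightarrow> bool" where
  "dg_hom A M actM dM N actN dN f \<longleftrightarrow>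
     (\<forall>n. \<forall>m\<in>M n. f m \<in> N n) \<and>
     (\<forall>n. \<forall>m\<in>M n. \<forall>m'\<in>M n. f (m + m') = f m + f m') \<and>
     (\<forall>n q. \<forall>m\<in>M n. \<forall>a\<in>A q. f (actM m a) = actN (f m) a) \<and>
     (\<forall>n. \<forall>m\<in>M n. f (dM m) = dN (f m))"

text \<open>The free graded right A^#-module with basis e_0,...,e_{r-1}, deg e_i = s i.
Elements are coefficient vectors v (v i = coefficient of e_i, zero for i >= r);
its degree-n component consists of those v with v i in A (n - s i).\<close>

definition free_comp :: "(int \<Rightarrow> 'a::ring_1 set) \<Rightarrow> nat \<Rightarrow> (nat \<Rightarrow> int) \<Rightarrow> int \<Rightarrow> (nat \<Rightarrow> 'a) set" where
  "free_comp A r s n = {v. (\<forall>i<r. v i \<in> A (n - s i)) \<and> (\<forall>i\<ge>r. v i = 0)}"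

definition free_act :: "(nat \<Rightarrow> 'a::ring_1) \<Rightarrow> 'a \<Rightarrow> (nat \<Rightarrow> 'a)" where
  "free_act v a = (\<lambda>i. v i * a)"

definition graded_rmod0 ::
  "(int \<Rightarrow> 'a::ring_1 set) \<Rightarrow> (int \<Rightarrow> 'e::ab_group_add set) \<Rightarrow> ('e \<Rightarrow> 'a \<Rightarrow> 'e) \<Rightarrow> bool" where
  "graded_rmod0 A E actE \<longleftrightarrow>
     graded_group E \<and>
     (\<forall>p. \<forall>e\<in>E p. \<forall>r\<in>A 0. actE e r \<in> E p) \<and>
     (\<forall>p. \<forall>e\<in>E p. \<forall>e'\<in>E p. \<forall>r\<in>A 0. actE (e + e') r = actE e r + actE e' r) \<and>
     (\<forall>p. \<forall>e\<in>E p. \<forall>r\<in>A 0. \<forall>r'\<in>A 0. actE e (r + r') = actE e r + actE e r') \<and>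
     (\<forall>p. \<forall>e\<in>E p. \<forall>r\<in>A 0. \<forall>r'\<in>A 0. actE (actE e r) r' = actE e (r * r')) \<and>
     (\<forall>p. \<forall>e\<in>E p. actE e 1 = e)"

definition bounded_graded :: "(int \<Rightarrow> 'e::ab_group_add set) \<Rightarrow> bool" where
  "bounded_graded E \<longleftrightarrow> (\<exists>N. \<forall>p. N < \<bar>p\<bar> \<longrightarrow> E p = {0})"

definition fg_projective ::
  "(int \<Rightarrow> 'a::ring_1 set) \<Rightarrow> 'e::ab_group_add set \<Rightarrow> ('e \<Rightarrow> 'a \<Rightarrow> 'e) \<Rightarrow> bool" where
  "fg_projective A P actE \<longleftrightarrow>
     (\<exists>r (\<iota>::'e \<Rightarrow> nat \<Rightarrow> 'a) (\<pi>::(nat \<Rightarrow> 'a) \<Rightarrow> 'e).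
        let F = free_comp A r (\<lambda>_. 0) 0 in
        (\<forall>e\<in>P. \<iota> e \<in> F) \<and>
        (\<forall>e\<in>P. \<forall>e'\<in>P. \<iota> (e + e') = \<iota> e + \<iota> e') \<and>
        (\<forall>e\<in>P. \<forall>s\<in>A 0. \<iota> (actE e s) = free_act (\<iota> e) s) \<and>
        (\<forall>v\<in>F. \<pi> v \<in> P) \<and>
        (\<forall>v\<in>F. \<forall>w\<in>F. \<pi> (v + w) = \<pi> v + \<pi> w) \<and>
        (\<forall>v\<in>F. \<forall>s\<in>A 0. \<pi> (free_act v s) = actE (\<pi> v) s) \<and>
        (\<forall>e\<in>P. \<pi> (\<iota> e) = e))"

text \<open>The tensor product E \<otimes>_{A^0} A^#, presented as the formal sums (multisets) of
pairs (e, a) of homogeneous elements modulo the congruence generated by the defining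
relations of the tensor product.\<close>

inductive tcong :: "(int \<Rightarrow> 'e::ab_group_add set) \<Rightarrow> ('e \<Rightarrow> 'a::ring_1 \<Rightarrow> 'e) \<Rightarrow> (int \<Rightarrow> 'a set) \<Rightarrow>
    ('e \<times> 'a) multiset \<Rightarrow> ('e \<times> 'a) multiset \<Rightarrow> bool"
  for E actE A where
  refl: "tcong E actE A X X"
| sym: "tcong E actE A X Y \<Longrightarrow> tcong E actE A Y X"
| trans: "tcong E actE A X Y \<Longrightarrow> tcong E actE A Y Z \<Longrightarrow> tcong E actE A X Z"
| add: "tcong E actE A X Y \<Longrightarrow> tcong E actE A (X + Z) (Y + Z)"
| zero_l: "a \<in> A q \<Longrightarrow> tcong E actE A {#(0, a)#} {#}"
| zero_r: "e \<in> E p \<Longrightarrow> tcong E actE A {#(e, 0)#} {#}"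
| add_l: "e \<in> E p \<Longrightarrow> e' \<in> E p \<Longrightarrow> a \<in> A q \<Longrightarrow>
          tcong E actE A {#(e + e', a)#} {#(e, a), (e', a)#}"
| add_r: "e \<in> E p \<Longrightarrow> a \<in> A q \<Longrightarrow> a' \<in> A q \<Longrightarrow>
          tcong E actE A {#(e, a + a')#} {#(e, a), (e, a')#}"
| bal: "e \<in> E p \<Longrightarrow> r \<in> A 0 \<Longrightarrow> a \<in> A q \<Longrightarrow>
          tcong E actE A {#(actE e r, a)#} {#(e, r * a)#}"

definition tensor_all :: "(int \<Rightarrow> 'e set) \<Rightarrow> (int \<Rightarrow> 'a set) \<Rightarrow> ('e \<times> 'a) multiset set" where
  "tensor_all E A = {X. \<forall>x\<in>#X. \<exists>p q. fst x \<in> E p \<and> snd x \<in> A q}"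

definition tensor_part :: "(int \<Rightarrow> 'e set) \<Rightarrow> (int \<Rightarrow> 'a set) \<Rightarrow> int \<Rightarrow> ('e \<times> 'a) multiset set" where
  "tensor_part E A n = {X. \<forall>x\<in>#X. \<exists>p q. p + q = n \<and> fst x \<in> E p \<and> snd x \<in> A q}"

definition tens_val :: "('e \<Rightarrow> 'a \<Rightarrow> 'm::comm_monoid_add) \<Rightarrow> ('e \<times> 'a) multiset \<Rightarrow> 'm" where
  "tens_val \<psi> X = sum_mset (image_mset (\<lambda>x. \<psi> (fst x) (snd x)) X)"

text \<open>psi (e, a) is the image of e \<otimes> a: the induced map E \<otimes>_{A^0} A^# -> M^# is a
well-defined injective map of right A^#-modules (tens_val X = tens_val Y iff X ~ Y),
compatible with the right A^#-action, and maps the degree-n part onto M n;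
i.e. an isomorphism of graded right A^#-modules.\<close>
definition tensor_iso ::
  "(int \<Rightarrow> 'e::ab_group_add set) \<Rightarrow> ('e \<Rightarrow> 'a::ring_1 \<Rightarrow> 'e) \<Rightarrow> (int \<Rightarrow> 'a set) \<Rightarrow>
   (int \<Rightarrow> 'm::ab_group_add set) \<Rightarrow> ('m \<Rightarrow> 'a \<Rightarrow> 'm) \<Rightarrow> ('e \<Rightarrow> 'a \<Rightarrow> 'm) \<Rightarrow> bool" where
  "tensor_iso E actE A M actM \<psi> \<longleftrightarrow>
     (\<forall>p q s. \<forall>e\<in>E p. \<forall>a\<in>A q. \<forall>b\<in>A s. actM (\<psi> e a) b = \<psi> e (a * b)) \<and>
     (\<forall>X\<in>tensor_all E A. \<forall>Y\<in>tensor_all E A.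
        tens_val \<psi> X = tens_val \<psi> Y \<longleftrightarrow> tcong E actE A X Y) \<and>
     (\<forall>n. M n = tens_val \<psi> ` tensor_part E A n)"

definition cohesive_via ::
  "(int \<Rightarrow> 'a::ring_1 set) \<Rightarrow> (int \<Rightarrow> 'm::ab_group_add set) \<Rightarrow> ('m \<Rightarrow> 'a \<Rightarrow> 'm) \<Rightarrow>
   (int \<Rightarrow> 'e::ab_group_add set) \<Rightarrow> ('e \<Rightarrow> 'a \<Rightarrow> 'e) \<Rightarrow> ('e \<Rightarrow> 'a \<Rightarrow> 'm) \<Rightarrow> bool" where
  "cohesive_via A M actM E actE \<psi> \<longleftrightarrow>
     graded_rmod0 A E actE \<and> bounded_graded E \<and> (\<forall>p. fg_projective A (E p) actE) \<and>
     tensor_iso E actE A M actM \<psi>"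

definition retract_of_free ::
  "(int \<Rightarrow> 'a::ring_1 set) \<Rightarrow> ('a \<Rightarrow> 'a) \<Rightarrow>
   (int \<Rightarrow> 'm::ab_group_add set) \<Rightarrow> ('m \<Rightarrow> 'a \<Rightarrow> 'm) \<Rightarrow> ('m \<Rightarrow> 'm) \<Rightarrow>
   nat \<Rightarrow> (nat \<Rightarrow> int) \<Rightarrow> ((nat \<Rightarrow> 'a) \<Rightarrow> (nat \<Rightarrow> 'a)) \<Rightarrow> bool" where
  "retract_of_free A dA M actM dM r s dF \<longleftrightarrow>
     dg_rmodule A dA (free_comp A r s) free_act dF \<and>
     (\<exists>f g. dg_hom A M actM dM (free_comp A r s) free_act dF f \<and>
            dg_hom A (free_comp A r s) free_act dF M actM dM g \<and>
            (\<forall>n. \<forall>m\<in>M n. g (f m) = m))"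

end

theory Submission
  imports Defs
begin


lemma subgrp_zero: "subgrp S \<Longrightarrow> 0 \<in> S"
  by (simp add: subgrp_def)
lemma subgrp_add: "subgrp S \<Longrightarrow> x \<in> S \<Longrightarrow> y \<in> S \<Longrightarrow> x + y \<in> S"
  by (simp add: subgrp_def)
lemma subgrp_neg: "subgrp S \<Longrightarrow> x \<in> S \<Longrightarrow> - x \<in> S"
  by (simp add: subgrp_def)
lemma subgrp_diff: "subgrp S \<Longrightarrow> x \<in> S \<Longrightarrow> y \<in> S \<Longrightarrow> x - y \<in> S"
  by (metis subgrp_add subgrp_neg diff_conv_add_uminus)
lemma subgrp_sum: "subgrp S \<Longrightarrow> (\<And>i. i \<in> I \<Longrightarrow> f i \<in> S) \<Longrightarrow> sum f I \<in> S"
proof (induction I rule: infinite_finite_induct)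
  case (insert x F)
  then show ?case by (simp add: subgrp_add)
qed (simp_all add: subgrp_zero)

lemma sgnpow_0 [simp]: "sgnpow n 0 = 0"
  by (simp add: sgnpow_def)
lemma sgnpow_add: "sgnpow n (x + y) = sgnpow n x + sgnpow n y"
  by (simp add: sgnpow_def)
lemma sgnpow_minus: "sgnpow n (- x) = - sgnpow n x"
  by (simp add: sgnpow_def)
lemma sgnpow_diff: "sgnpow n (x - y) = sgnpow n x - sgnpow n y"
  by (simp add: sgnpow_def)
lemma sgnpow_sgnpow: "sgnpow m (sgnpow n x) = sgnpow (m + n) x"
  by (auto simp add: sgnpow_def)
lemma sgnpow_succ: "sgnpow (n + 1) x = - sgnpow n x"
  by (auto simp add: sgnpow_def)
lemma sgnpow_succ': "sgnpow (1 + n) x = - sgnpow n x"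
  by (auto simp add: sgnpow_def)
lemma sgnpow_mem: "subgrp S \<Longrightarrow> x \<in> S \<Longrightarrow> sgnpow n x \<in> S"
  by (simp add: sgnpow_def subgrp_neg)
lemma sgnpow_mult: "sgnpow n (x::'a::ring) * a = sgnpow n (x * a)"
  by (simp add: sgnpow_def)
lemma sgnpow_apply: "(sgnpow n v) i = sgnpow n (v i)"
  by (simp add: sgnpow_def)
lemma free_act_sgnpow: "free_act (sgnpow n v) a = sgnpow n (free_act v a)"
  by (auto simp add: sgnpow_def free_act_def fun_eq_iff)
lemma free_act_add: "free_act (v + w) a = free_act v a + free_act w a"
  by (simp add: free_act_def fun_eq_iff distrib_right)
lemma free_act_minus: "free_act (- v) a = - free_act v a"
  by (simp add: free_act_def fun_eq_iff)
lemma free_act_diff: "free_act (v - w) a = free_act v a - free_act w a"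
  by (simp add: free_act_def fun_eq_iff left_diff_distrib)
lemma free_act_zero [simp]: "free_act 0 a = 0"
  by (simp add: free_act_def fun_eq_iff)
lemma free_act_rzero [simp]: "free_act v 0 = 0"
  by (simp add: free_act_def fun_eq_iff)
lemma free_act_apply: "free_act v a i = v i * a"
  by (simp add: free_act_def)
lemma free_act_assoc: "free_act (free_act v a) b = free_act v (a * b)"
  by (simp add: free_act_def mult.assoc)
lemma free_act_radd: "free_act v (a + b) = free_act v a + free_act v b"
  by (simp add: free_act_def fun_eq_iff distrib_left)
lemma sum_fun_apply: "(sum f I) i = sum (\<lambda>n. f n i) I"
  by (induction I rule: infinite_finite_induct) auto

section \<open>dg algebras\<close>

locale dga =
  fixes \<kappa> :: "'k::comm_ring_1 \<Rightarrow> 'a::ring_1" and A :: "int \<Rightarrow> 'a set" and dA :: "'a \<Rightarrow> 'a"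
  assumes dga: "dg_algebra \<kappa> A dA"
begin

lemma A_sub: "subgrp (A n)"
  using dga by (simp add: dg_algebra_def graded_group_def)
lemma A_indep: "grade_indep A"
  using dga by (simp add: dg_algebra_def graded_group_def)
lemma A_zero [simp]: "0 \<in> A n"
  using A_sub subgrp_zero by blast
lemma A_add: "x \<in> A n \<Longrightarrow> y \<in> A n \<Longrightarrow> x + y \<in> A n"
  using A_sub subgrp_add by blast
lemma A_neg: "x \<in> A n \<Longrightarrow> - x \<in> A n"
  using A_sub subgrp_neg by blast
lemma A_diff: "x \<in> A n \<Longrightarrow> y \<in> A n \<Longrightarrow> x - y \<in> A n"
  using A_sub subgrp_diff by blast
lemma A_sgnpow: "x \<in> A n \<Longrightarrow> sgnpow k x \<in> A n"
  using A_sub sgnpow_mem by blast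
lemma A_one: "1 \<in> A 0"
  using dga by (simp add: dg_algebra_def)
lemma A_mult: "x \<in> A p \<Longrightarrow> y \<in> A q \<Longrightarrow> k = p + q \<Longrightarrow> x * y \<in> A k"
  using dga by (simp add: dg_algebra_def)
lemma dA_mem: "x \<in> A p \<Longrightarrow> k = p + 1 \<Longrightarrow> dA x \<in> A k"
  using dga by (simp add: dg_algebra_def)
lemma dA_add: "x \<in> A p \<Longrightarrow> y \<in> A p \<Longrightarrow> dA (x + y) = dA x + dA y"
  using dga by (simp add: dg_algebra_def)
lemma dA_zero [simp]: "dA 0 = 0"
proof -
  have "dA (0 + 0) = dA 0 + dA 0" using dA_add[of 0 0 0] by simp
  then show ?thesis by simp
qed
lemma dA_neg: "x \<in> A p \<Longrightarrow> dA (- x) = - dA x"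
proof -
  assume x: "x \<in> A p"
  have "dA (x + - x) = dA x + dA (- x)" using dA_add[OF x A_neg[OF x]] .
  then show ?thesis by (simp add: eq_neg_iff_add_eq_0 add.commute)
qed
lemma dA_diff: "x \<in> A p \<Longrightarrow> y \<in> A p \<Longrightarrow> dA (x - y) = dA x - dA y"
proof -
  assume x: "x \<in> A p" and y: "y \<in> A p"
  have "dA (x + - y) = dA x + dA (- y)" by (rule dA_add[OF x A_neg[OF y]])
  then show ?thesis by (simp add: dA_neg[OF y])
qed
lemma dA_sgnpow: "x \<in> A p \<Longrightarrow> dA (sgnpow k x) = sgnpow k (dA x)"
  by (simp add: sgnpow_def dA_neg)
lemma dA_dA: "x \<in> A p \<Longrightarrow> dA (dA x) = 0"
  using dga by (simp add: dg_algebra_def)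
lemma dA_mult: "x \<in> A p \<Longrightarrow> y \<in> A q \<Longrightarrow> dA (x * y) = dA x * y + sgnpow p (x * dA y)"
  using dga by (simp add: dg_algebra_def)

section \<open>Free modules\<close>

lemma fc_iff: "v \<in> free_comp A R s n \<longleftrightarrow> (\<forall>i<R. v i \<in> A (n - s i)) \<and> (\<forall>i. R \<le> i \<longrightarrow> v i = 0)"
  by (auto simp add: free_comp_def)
lemma fc_in: "v \<in> free_comp A R s n \<Longrightarrow> i < R \<Longrightarrow> k = n - s i \<Longrightarrow> v i \<in> A k"
  by (simp add: fc_iff)
lemma fc_out: "v \<in> free_comp A R s n \<Longrightarrow> R \<le> i \<Longrightarrow> v i = 0"
  by (simp add: fc_iff)
lemma fc_zero [simp]: "0 \<in> free_comp A R s n"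
  by (simp add: fc_iff)
lemma fc_add: "v \<in> free_comp A R s n \<Longrightarrow> w \<in> free_comp A R s n \<Longrightarrow> v + w \<in> free_comp A R s n"
  by (simp add: fc_iff A_add)
lemma fc_neg: "v \<in> free_comp A R s n \<Longrightarrow> - v \<in> free_comp A R s n"
  by (simp add: fc_iff A_neg)
lemma fc_diff: "v \<in> free_comp A R s n \<Longrightarrow> w \<in> free_comp A R s n \<Longrightarrow> v - w \<in> free_comp A R s n"
  by (simp add: fc_iff A_diff)
lemma fc_sgnpow: "v \<in> free_comp A R s n \<Longrightarrow> sgnpow k v \<in> free_comp A R s n"
  by (simp add: sgnpow_def fc_neg)
lemma fc_sub: "subgrp (free_comp A R s n)"
  by (simp add: subgrp_def fc_add fc_neg)
lemma fc_sum: "(\<And>i. i \<in> I \<Longrightarrow> f i \<in> free_comp A R s n) \<Longrightarrow> sum f I \<in> free_comp A R s n"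
  using subgrp_sum[OF fc_sub] .
lemma fc_act: "v \<in> free_comp A R s n \<Longrightarrow> a \<in> A q \<Longrightarrow> k = n + q \<Longrightarrow> free_act v a \<in> free_comp A R s k"
  by (auto simp add: fc_iff free_act_def intro: A_mult)

lemma fc_indep: "grade_indep (free_comp A R s)"
  unfolding grade_indep_def
proof (intro allI impI ballI)
  fix S c n
  assume S: "finite S" and c: "\<forall>n\<in>S. c n \<in> free_comp A R s n" and s0: "sum c S = 0" and n: "n \<in> S"
  show "c n = 0"
  proof
    fix i
    show "c n i = 0 i"
    proof (cases "i < R")
      case False
      then show ?thesis using c n by (simp add: fc_iff)
    next
      case True
      define c' where "c' m = c (m + s i) i" for m
      have inj: "inj_on (\<lambda>n. n - s i) S" by (auto simp: inj_on_def)
      have "sum c' ((\<lambda>n. n - s i) ` S) = sum (\<lambda>n. c n i) S"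
        by (simp add: sum.reindex[OF inj] c'_def)
      also have "\<dots> = 0" using s0 by (metis sum_fun_apply zero_fun_apply)
      finally have "sum c' ((\<lambda>n. n - s i) ` S) = 0" .
      moreover have "\<forall>m\<in>(\<lambda>n. n - s i) ` S. c' m \<in> A m"
        using c True by (auto simp: c'_def fc_iff)
      ultimately have "\<forall>m\<in>(\<lambda>n. n - s i) ` S. c' m = 0"
        using A_indep S unfolding grade_indep_def by blast
      then have "c' (n - s i) = 0" using n by blast
      then show ?thesis by (simp add: c'_def)
    qed
  qed
qed

lemma fc_graded: "graded_group (free_comp A R s)"
  by (simp add: graded_group_def fc_sub fc_indep)

lemma fc_rmod: "graded_rmodule A (free_comp A R s) free_act"
  unfolding graded_rmodule_def
  apply (intro conjI fc_graded allI ballI impI)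
  apply (rule fc_act, assumption, assumption, simp)
  apply (rule free_act_add)
  apply (rule free_act_radd)
  apply (rule free_act_assoc)
  apply (simp add: free_act_def)
  done

end



locale dgmod = dga \<kappa> A dA
  for \<kappa> :: "'k::comm_ring_1 \<Rightarrow> 'a::ring_1" and A dA +
  fixes M :: "int \<Rightarrow> 'm::ab_group_add set" and actM :: "'m \<Rightarrow> 'a \<Rightarrow> 'm" and dM :: "'m \<Rightarrow> 'm"
  assumes Mdg: "dg_rmodule A dA M actM dM"
begin

lemma M_rmod: "graded_rmodule A M actM"
  using Mdg by (simp add: dg_rmodule_def)
lemma M_sub: "subgrp (M n)"
  using M_rmod by (simp add: graded_rmodule_def graded_group_def)
lemma M_zero [simp]: "0 \<in> M n"
  using M_sub subgrp_zero by blast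
lemma M_add: "x \<in> M n \<Longrightarrow> y \<in> M n \<Longrightarrow> x + y \<in> M n"
  using M_sub subgrp_add by blast
lemma M_neg: "x \<in> M n \<Longrightarrow> - x \<in> M n"
  using M_sub subgrp_neg by blast
lemma M_diff: "x \<in> M n \<Longrightarrow> y \<in> M n \<Longrightarrow> x - y \<in> M n"
  using M_sub subgrp_diff by blast
lemma M_sum: "(\<And>i. i \<in> I \<Longrightarrow> f i \<in> M n) \<Longrightarrow> sum f I \<in> M n"
  using subgrp_sum[OF M_sub] .
lemma act_mem: "m \<in> M n \<Longrightarrow> a \<in> A q \<Longrightarrow> k = n + q \<Longrightarrow> actM m a \<in> M k"
  using M_rmod by (simp add: graded_rmodule_def)
lemma act_add: "m \<in> M n \<Longrightarrow> m' \<in> M n \<Longrightarrow> a \<in> A q \<Longrightarrow> actM (m + m') a = actM m a + actM m' a"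
  using M_rmod by (simp add: graded_rmodule_def)
lemma act_zero: "a \<in> A q \<Longrightarrow> actM 0 a = 0"
proof -
  assume a: "a \<in> A q"
  have "actM (0 + 0) a = actM 0 a + actM 0 a" using act_add[OF M_zero M_zero a] .
  then show ?thesis by simp
qed
lemma act_sum: "(\<And>i. i \<in> I \<Longrightarrow> f i \<in> M n) \<Longrightarrow> a \<in> A q \<Longrightarrow> actM (sum f I) a = (\<Sum>i\<in>I. actM (f i) a)"
proof (induction I rule: infinite_finite_induct)
  case (infinite A)
  then show ?case by (simp add: act_zero)
next
  case empty
  then show ?case by (simp add: act_zero)
next
  case (insert x F)
  have "actM (sum f (insert x F)) a = actM (f x + sum f F) a" using insert by simp
  also have "\<dots> = actM (f x) a + actM (sum f F) a"
    using insert by (intro act_add[of _ n]) (auto intro: M_sum)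
  finally show ?case using insert by simp
qed
lemma dM_mem: "m \<in> M n \<Longrightarrow> k = n + 1 \<Longrightarrow> dM m \<in> M k"
  using Mdg by (simp add: dg_rmodule_def)
lemma dM_add: "m \<in> M n \<Longrightarrow> m' \<in> M n \<Longrightarrow> dM (m + m') = dM m + dM m'"
  using Mdg by (simp add: dg_rmodule_def)
lemma dM_zero [simp]: "dM 0 = 0"
proof -
  have "dM (0 + 0) = dM 0 + dM 0" using dM_add[OF M_zero M_zero] .
  then show ?thesis by simp
qed
lemma dM_dM: "m \<in> M n \<Longrightarrow> dM (dM m) = 0"
  using Mdg by (simp add: dg_rmodule_def)
lemma dM_act: "m \<in> M n \<Longrightarrow> a \<in> A q \<Longrightarrow> dM (actM m a) = actM (dM m) a + sgnpow n (actM m (dA a))"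
  using Mdg by (simp add: dg_rmodule_def)

end

locale absret = dgmod \<kappa> A dA M actM dM
  for \<kappa> :: "'k::comm_ring_1 \<Rightarrow> 'a::ring_1" and A dA
    and M :: "int \<Rightarrow> 'm::ab_group_add set" and actM dM +
  fixes R :: nat and s0 :: "nat \<Rightarrow> int" and \<Phi> :: "'m \<Rightarrow> nat \<Rightarrow> 'a" and \<Gamma> :: "(nat \<Rightarrow> 'a) \<Rightarrow> 'm"
  assumes \<Phi>_mem: "m \<in> M n \<Longrightarrow> \<Phi> m \<in> free_comp A R s0 n"
    and \<Phi>_add: "m \<in> M n \<Longrightarrow> m' \<in> M n \<Longrightarrow> \<Phi> (m + m') = \<Phi> m + \<Phi> m'"
    and \<Phi>_act: "m \<in> M n \<Longrightarrow> a \<in> A q \<Longrightarrow> \<Phi> (actM m a) = free_act (\<Phi> m) a"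
    and \<Gamma>_mem: "v \<in> free_comp A R s0 n \<Longrightarrow> \<Gamma> v \<in> M n"
    and \<Gamma>_add: "v \<in> free_comp A R s0 n \<Longrightarrow> w \<in> free_comp A R s0 n \<Longrightarrow> \<Gamma> (v + w) = \<Gamma> v + \<Gamma> w"
    and \<Gamma>_act: "v \<in> free_comp A R s0 n \<Longrightarrow> a \<in> A q \<Longrightarrow> \<Gamma> (free_act v a) = actM (\<Gamma> v) a"
    and \<Gamma>\<Phi>: "m \<in> M n \<Longrightarrow> \<Gamma> (\<Phi> m) = m"
begin

abbreviation P where "P n \<equiv> free_comp A R s0 n"

lemma \<Phi>_zero [simp]: "\<Phi> 0 = 0"
proof -
  have "\<Phi> (0 + 0) = \<Phi> 0 + \<Phi> 0" using \<Phi>_add[OF M_zero M_zero] .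
  then show ?thesis by simp
qed
lemma \<Phi>_neg: "m \<in> M n \<Longrightarrow> \<Phi> (- m) = - \<Phi> m"
  by (metis \<Phi>_add M_neg \<Phi>_zero add.right_inverse add_eq_0_iff)
lemma \<Phi>_diff: "m \<in> M n \<Longrightarrow> m' \<in> M n \<Longrightarrow> \<Phi> (m - m') = \<Phi> m - \<Phi> m'"
  by (metis \<Phi>_add M_neg \<Phi>_neg diff_conv_add_uminus)
lemma \<Phi>_sgnpow: "m \<in> M n \<Longrightarrow> \<Phi> (sgnpow k m) = sgnpow k (\<Phi> m)"
  by (simp add: sgnpow_def \<Phi>_neg)
lemma \<Gamma>_zero [simp]: "\<Gamma> 0 = 0"
proof -
  have "\<Gamma> (0 + 0) = \<Gamma> 0 + \<Gamma> 0" using \<Gamma>_add[OF fc_zero fc_zero] .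
  then show ?thesis by simp
qed
lemma \<Gamma>_neg: "v \<in> P n \<Longrightarrow> \<Gamma> (- v) = - \<Gamma> v"
  by (metis \<Gamma>_add fc_neg \<Gamma>_zero add.right_inverse add_eq_0_iff)
lemma \<Gamma>_diff: "v \<in> P n \<Longrightarrow> w \<in> P n \<Longrightarrow> \<Gamma> (v - w) = \<Gamma> v - \<Gamma> w"
  by (metis \<Gamma>_add fc_neg \<Gamma>_neg diff_conv_add_uminus)

definition dP :: "(nat \<Rightarrow> 'a) \<Rightarrow> nat \<Rightarrow> 'a" where
  "dP v = (\<lambda>i. if i < R then sgnpow (s0 i) (dA (v i)) else 0)"

lemma dP_mem: "v \<in> P n \<Longrightarrow> k = n + 1 \<Longrightarrow> dP v \<in> P k"
  by (auto simp: dP_def fc_iff intro!: A_sgnpow dA_mem)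
lemma dP_zero [simp]: "dP 0 = 0"
  by (simp add: dP_def fun_eq_iff)
lemma dP_add: "v \<in> P n \<Longrightarrow> w \<in> P n \<Longrightarrow> dP (v + w) = dP v + dP w"
  by (auto simp: dP_def fun_eq_iff fc_iff dA_add sgnpow_add)
lemma dP_neg: "v \<in> P n \<Longrightarrow> dP (- v) = - dP v"
  by (auto simp: dP_def fun_eq_iff fc_iff dA_neg sgnpow_minus)
lemma dP_diff: "v \<in> P n \<Longrightarrow> w \<in> P n \<Longrightarrow> dP (v - w) = dP v - dP w"
  by (auto simp: dP_def fun_eq_iff fc_iff dA_diff sgnpow_diff)
lemma dP_act: "v \<in> P n \<Longrightarrow> a \<in> A q \<Longrightarrow>
    dP (free_act v a) = free_act (dP v) a + sgnpow n (free_act v (dA a))"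
proof (rule ext)
  fix i
  assume v: "v \<in> P n" and a: "a \<in> A q"
  show "dP (free_act v a) i = (free_act (dP v) a + sgnpow n (free_act v (dA a))) i"
  proof (cases "i < R")
    case True
    then have vi: "v i \<in> A (n - s0 i)" using v by (simp add: fc_iff)
    have "dP (free_act v a) i = sgnpow (s0 i) (dA (v i * a))"
      using True by (simp add: dP_def free_act_def)
    also have "\<dots> = sgnpow (s0 i) (dA (v i) * a) + sgnpow (s0 i + (n - s0 i)) (v i * dA a)"
      using dA_mult[OF vi a] by (simp add: sgnpow_add sgnpow_sgnpow)
    also have "\<dots> = (free_act (dP v) a + sgnpow n (free_act v (dA a))) i"
      using True by (simp add: dP_def free_act_def sgnpow_apply sgnpow_mult)
    finally show ?thesis .
  next
    case False
    then show ?thesis using v by (simp add: dP_def free_act_def sgnpow_apply fc_iff)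
  qed
qed

definition eps where "eps v = \<Phi> (\<Gamma> v)"
definition epc where "epc v = v - eps v"
definition nE where "nE v = \<Phi> (dM (\<Gamma> v))"
definition nQ where "nQ v = epc (dP (epc v))"
definition nb where "nb v = nE v + nQ v"

lemma eps_mem: "v \<in> P n \<Longrightarrow> eps v \<in> P n"
  by (simp add: eps_def \<Phi>_mem \<Gamma>_mem)
lemma eps_add: "v \<in> P n \<Longrightarrow> w \<in> P n \<Longrightarrow> eps (v + w) = eps v + eps w"
  by (simp add: eps_def \<Gamma>_add \<Phi>_add[OF \<Gamma>_mem \<Gamma>_mem])
lemma eps_zero [simp]: "eps 0 = 0"
  by (simp add: eps_def)
lemma eps_neg: "v \<in> P n \<Longrightarrow> eps (- v) = - eps v"
  by (simp add: eps_def \<Gamma>_neg \<Phi>_neg[OF \<Gamma>_mem])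
lemma eps_diff: "v \<in> P n \<Longrightarrow> w \<in> P n \<Longrightarrow> eps (v - w) = eps v - eps w"
  by (simp add: eps_def \<Gamma>_diff \<Phi>_diff[OF \<Gamma>_mem \<Gamma>_mem])
lemma eps_act: "v \<in> P n \<Longrightarrow> a \<in> A q \<Longrightarrow> eps (free_act v a) = free_act (eps v) a"
  by (simp add: eps_def \<Gamma>_act \<Phi>_act[OF \<Gamma>_mem])
lemma \<Gamma>_eps: "v \<in> P n \<Longrightarrow> \<Gamma> (eps v) = \<Gamma> v"
  by (simp add: eps_def \<Gamma>\<Phi>[OF \<Gamma>_mem])
lemma eps_eps: "v \<in> P n \<Longrightarrow> eps (eps v) = eps v"
  by (simp add: eps_def \<Gamma>\<Phi>[OF \<Gamma>_mem])
lemma eps_\<Phi>: "m \<in> M n \<Longrightarrow> eps (\<Phi> m) = \<Phi> m"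
  by (simp add: eps_def \<Gamma>\<Phi>)

lemma epc_mem: "v \<in> P n \<Longrightarrow> epc v \<in> P n"
  by (simp add: epc_def fc_diff eps_mem)
lemma epc_add: "v \<in> P n \<Longrightarrow> w \<in> P n \<Longrightarrow> epc (v + w) = epc v + epc w"
  by (simp add: epc_def eps_add)
lemma epc_zero [simp]: "epc 0 = 0"
  by (simp add: epc_def)
lemma epc_neg: "v \<in> P n \<Longrightarrow> epc (- v) = - epc v"
  by (simp add: epc_def eps_neg)
lemma epc_diff: "v \<in> P n \<Longrightarrow> w \<in> P n \<Longrightarrow> epc (v - w) = epc v - epc w"
  by (simp add: epc_def eps_diff)
lemma epc_act: "v \<in> P n \<Longrightarrow> a \<in> A q \<Longrightarrow> epc (free_act v a) = free_act (epc v) a"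
  by (simp add: epc_def eps_act free_act_diff)
lemma eps_epc: "v \<in> P n \<Longrightarrow> eps (epc v) = 0"
  by (simp add: epc_def eps_diff eps_mem eps_eps)
lemma epc_eps: "v \<in> P n \<Longrightarrow> epc (eps v) = 0"
  by (simp add: epc_def eps_eps)
lemma epc_epc: "v \<in> P n \<Longrightarrow> epc (epc v) = epc v"
  by (simp add: epc_def eps_diff eps_mem eps_eps)
lemma \<Gamma>_epc: "v \<in> P n \<Longrightarrow> \<Gamma> (epc v) = 0"
  by (simp add: epc_def \<Gamma>_diff eps_mem \<Gamma>_eps)
lemma eps_plus_epc: "eps v + epc v = v"
  by (simp add: epc_def)

lemma epc_sgnpow: "v \<in> P n \<Longrightarrow> epc (sgnpow k v) = sgnpow k (epc v)"
  by (simp add: sgnpow_def epc_neg)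
lemma eps_sgnpow: "v \<in> P n \<Longrightarrow> eps (sgnpow k v) = sgnpow k (eps v)"
  by (simp add: sgnpow_def eps_neg)
lemma dP_sgnpow: "v \<in> P n \<Longrightarrow> dP (sgnpow k v) = sgnpow k (dP v)"
  by (simp add: sgnpow_def dP_neg)

lemma nE_mem: "v \<in> P n \<Longrightarrow> k = n + 1 \<Longrightarrow> nE v \<in> P k"
  unfolding nE_def by (rule \<Phi>_mem, rule dM_mem, rule \<Gamma>_mem)
lemma nE_zero [simp]: "nE 0 = 0"
  by (simp add: nE_def)
lemma nE_add: "v \<in> P n \<Longrightarrow> w \<in> P n \<Longrightarrow> nE (v + w) = nE v + nE w"
  unfolding nE_def
  by (simp add: \<Gamma>_add dM_add[OF \<Gamma>_mem \<Gamma>_mem] \<Phi>_add[OF dM_mem[OF \<Gamma>_mem] dM_mem[OF \<Gamma>_mem]])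
lemma nE_act: "v \<in> P n \<Longrightarrow> a \<in> A q \<Longrightarrow>
   nE (free_act v a) = free_act (nE v) a + sgnpow n (free_act (eps v) (dA a))"
proof -
  assume v: "v \<in> P n" and a: "a \<in> A q"
  have m: "\<Gamma> v \<in> M n" using \<Gamma>_mem[OF v] .
  have dm: "dM (\<Gamma> v) \<in> M (n + 1)" using dM_mem[OF m] by simp
  have 1: "actM (dM (\<Gamma> v)) a \<in> M (n + q + 1)" by (rule act_mem[OF dm a]) simp
  have 2: "sgnpow n (actM (\<Gamma> v) (dA a)) \<in> M (n + q + 1)"
    using act_mem[OF m dA_mem[OF a HOL.refl]] by (simp add: sgnpow_mem M_sub add.assoc)
  have "nE (free_act v a) = \<Phi> (actM (dM (\<Gamma> v)) a + sgnpow n (actM (\<Gamma> v) (dA a)))"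
    by (simp add: nE_def \<Gamma>_act[OF v a] dM_act[OF m a])
  also have "\<dots> = \<Phi> (actM (dM (\<Gamma> v)) a) + \<Phi> (sgnpow n (actM (\<Gamma> v) (dA a)))"
    using \<Phi>_add[OF 1 2] .
  also have "\<dots> = free_act (nE v) a + sgnpow n (free_act (eps v) (dA a))"
    using \<Phi>_act[OF dm a] \<Phi>_sgnpow[OF act_mem[OF m dA_mem[OF a HOL.refl] HOL.refl]]
      \<Phi>_act[OF m dA_mem[OF a HOL.refl]]
    by (simp add: nE_def eps_def)
  finally show ?thesis .
qed
lemma nE_eps: "v \<in> P n \<Longrightarrow> nE (eps v) = nE v"
  by (simp add: nE_def \<Gamma>_eps)
lemma eps_nE: "v \<in> P n \<Longrightarrow> eps (nE v) = nE v"
  by (simp add: nE_def eps_\<Phi>[OF dM_mem[OF \<Gamma>_mem HOL.refl]])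
lemma epc_nE: "v \<in> P n \<Longrightarrow> epc (nE v) = 0"
  by (simp add: epc_def eps_nE)
lemma nE_nE: "v \<in> P n \<Longrightarrow> nE (nE v) = 0"
  by (simp add: nE_def \<Gamma>\<Phi>[OF dM_mem[OF \<Gamma>_mem HOL.refl]] dM_dM[OF \<Gamma>_mem])
lemma nE_epc: "v \<in> P n \<Longrightarrow> nE (epc v) = 0"
  by (simp add: nE_def \<Gamma>_epc)

lemma nQ_mem: "v \<in> P n \<Longrightarrow> k = n + 1 \<Longrightarrow> nQ v \<in> P k"
  unfolding nQ_def by (rule epc_mem, rule dP_mem, rule epc_mem)
lemma nQ_zero [simp]: "nQ 0 = 0"
  by (simp add: nQ_def)
lemma nQ_add: "v \<in> P n \<Longrightarrow> w \<in> P n \<Longrightarrow> nQ (v + w) = nQ v + nQ w"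
  unfolding nQ_def
  by (simp add: epc_add dP_add[OF epc_mem epc_mem] epc_add[OF dP_mem[OF epc_mem HOL.refl] dP_mem[OF epc_mem HOL.refl]])
lemma nQ_act: "v \<in> P n \<Longrightarrow> a \<in> A q \<Longrightarrow>
   nQ (free_act v a) = free_act (nQ v) a + sgnpow n (free_act (epc v) (dA a))"
proof -
  assume v: "v \<in> P n" and a: "a \<in> A q"
  have e: "epc v \<in> P n" using epc_mem[OF v] .
  have de: "dP (epc v) \<in> P (n + 1)" using dP_mem[OF e HOL.refl] .
  have 1: "free_act (dP (epc v)) a \<in> P (n + q + 1)" by (rule fc_act[OF de a]) simp
  have 2: "sgnpow n (free_act (epc v) (dA a)) \<in> P (n + q + 1)"
    using fc_act[OF e dA_mem[OF a HOL.refl]] by (simp add: fc_sgnpow add.assoc)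
  have 3: "free_act (epc v) (dA a) \<in> P (n + q + 1)"
    using fc_act[OF e dA_mem[OF a HOL.refl]] by (simp add: add.assoc)
  have "nQ (free_act v a) = epc (free_act (dP (epc v)) a + sgnpow n (free_act (epc v) (dA a)))"
    by (simp add: nQ_def epc_act[OF v a] dP_act[OF e a])
  also have "\<dots> = epc (free_act (dP (epc v)) a) + epc (sgnpow n (free_act (epc v) (dA a)))"
    using epc_add[OF 1 2] .
  also have "\<dots> = free_act (nQ v) a + sgnpow n (free_act (epc v) (dA a))"
    using epc_act[OF de a] epc_sgnpow[OF 3] epc_act[OF e dA_mem[OF a HOL.refl]] epc_epc[OF v]
    by (simp add: nQ_def)
  finally show ?thesis .
qed
lemma nQ_eps: "v \<in> P n \<Longrightarrow> nQ (eps v) = 0"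
  by (simp add: nQ_def epc_eps)
lemma eps_nQ: "v \<in> P n \<Longrightarrow> eps (nQ v) = 0"
  by (simp add: nQ_def eps_epc[OF dP_mem[OF epc_mem HOL.refl]])
lemma epc_nQ: "v \<in> P n \<Longrightarrow> epc (nQ v) = nQ v"
  by (simp add: epc_def eps_nQ)

lemma nb_mem: "v \<in> P n \<Longrightarrow> k = n + 1 \<Longrightarrow> nb v \<in> P k"
  unfolding nb_def by (rule fc_add, (rule nE_mem nQ_mem; assumption)+)
lemma nb_zero [simp]: "nb 0 = 0"
  by (simp add: nb_def)
lemma nb_add: "v \<in> P n \<Longrightarrow> w \<in> P n \<Longrightarrow> nb (v + w) = nb v + nb w"
  by (simp add: nb_def nE_add nQ_add)
lemma nb_neg: "v \<in> P n \<Longrightarrow> nb (- v) = - nb v"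
proof -
  assume v: "v \<in> P n"
  have "nb (v + - v) = nb v + nb (- v)" by (rule nb_add[OF v fc_neg[OF v]])
  then show ?thesis by (simp add: eq_neg_iff_add_eq_0 add.commute)
qed
lemma nb_diff: "v \<in> P n \<Longrightarrow> w \<in> P n \<Longrightarrow> nb (v - w) = nb v - nb w"
proof -
  assume v: "v \<in> P n" and w: "w \<in> P n"
  have "nb (v + - w) = nb v + nb (- w)" by (rule nb_add[OF v fc_neg[OF w]])
  then show ?thesis by (simp add: nb_neg[OF w])
qed
lemma nb_sgnpow: "v \<in> P n \<Longrightarrow> nb (sgnpow k v) = sgnpow k (nb v)"
  by (simp add: sgnpow_def nb_neg)
lemma nb_act: "v \<in> P n \<Longrightarrow> a \<in> A q \<Longrightarrow>
   nb (free_act v a) = free_act (nb v) a + sgnpow n (free_act v (dA a))"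
proof -
  assume v: "v \<in> P n" and a: "a \<in> A q"
  have "nb (free_act v a) = free_act (nE v) a + free_act (nQ v) a +
      sgnpow n (free_act (eps v) (dA a) + free_act (epc v) (dA a))"
    by (simp add: nb_def nE_act[OF v a] nQ_act[OF v a] sgnpow_add)
  also have "\<dots> = free_act (nb v) a + sgnpow n (free_act v (dA a))"
    by (simp add: nb_def free_act_add[symmetric] eps_plus_epc)
  finally show ?thesis .
qed
lemma eps_nb: "v \<in> P n \<Longrightarrow> eps (nb v) = nE v"
  by (simp add: nb_def eps_add[OF nE_mem[OF _ HOL.refl] nQ_mem[OF _ HOL.refl]] eps_nE eps_nQ)
lemma nb_eps: "v \<in> P n \<Longrightarrow> nb (eps v) = nE v"
  by (simp add: nb_def nE_eps nQ_eps)
lemma nb_epc: "v \<in> P n \<Longrightarrow> nb (epc v) = epc (nb v)"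
  by (simp add: epc_def nb_diff[OF _ eps_mem] nb_eps eps_nb)
lemma nb_\<Phi>: "m \<in> M n \<Longrightarrow> nb (\<Phi> m) = \<Phi> (dM m)"
  by (simp add: nb_def nE_def \<Gamma>\<Phi> nQ_def epc_def eps_\<Phi>)
lemma \<Gamma>_nb: "v \<in> P n \<Longrightarrow> \<Gamma> (nb v) = dM (\<Gamma> v)"
proof -
  assume v: "v \<in> P n"
  have "\<Gamma> (nb v) = \<Gamma> (nE v) + \<Gamma> (nQ v)"
    unfolding nb_def using \<Gamma>_add[OF nE_mem[OF v HOL.refl] nQ_mem[OF v HOL.refl]] .
  also have "\<Gamma> (nQ v) = 0"
    unfolding nQ_def by (rule \<Gamma>_epc[OF dP_mem[OF epc_mem[OF v] HOL.refl]])
  also have "\<Gamma> (nE v) = dM (\<Gamma> v)"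
    by (simp add: nE_def \<Gamma>\<Phi>[OF dM_mem[OF \<Gamma>_mem[OF v] HOL.refl]])
  finally show ?thesis by simp
qed
lemma eps_nbnb: "v \<in> P n \<Longrightarrow> eps (nb (nb v)) = 0"
proof -
  assume v: "v \<in> P n"
  have w: "nb v \<in> P (n + 1)" using nb_mem[OF v HOL.refl] .
  have "eps (nb (nb v)) = nE (nb v)" using eps_nb[OF w] .
  also have "\<dots> = nE (eps (nb v))" using nE_eps[OF w] by simp
  also have "\<dots> = nE (nE v)" using eps_nb[OF v] by simp
  also have "\<dots> = 0" using nE_nE[OF v] .
  finally show ?thesis .
qed
lemma epc_nbnb: "v \<in> P n \<Longrightarrow> epc (nb (nb v)) = nb (nb v)"
  by (simp add: epc_def eps_nbnb)

section \<open>The free module N = P (+) P[1]\<close>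

definition s1 :: "nat \<Rightarrow> int" where
  "s1 i = (if i < R then s0 i else s0 (i - R) - 1)"
abbreviation N where "N n \<equiv> free_comp A (2 * R) s1 n"
definition fstv :: "(nat \<Rightarrow> 'a) \<Rightarrow> nat \<Rightarrow> 'a" where
  "fstv v = (\<lambda>i. if i < R then v i else 0)"
definition sndv :: "(nat \<Rightarrow> 'a) \<Rightarrow> nat \<Rightarrow> 'a" where
  "sndv v = (\<lambda>i. if i < R then v (i + R) else 0)"
definition join :: "(nat \<Rightarrow> 'a) \<Rightarrow> (nat \<Rightarrow> 'a) \<Rightarrow> nat \<Rightarrow> 'a" where
  "join x y = (\<lambda>i. if i < R then x i else if i < 2 * R then y (i - R) else 0)"

lemma fstv_mem: "v \<in> N n \<Longrightarrow> fstv v \<in> P n"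
proof -
  assume v: "v \<in> N n"
  have "v i \<in> A (n - s0 i)" if "i < R" for i using fc_in[OF v, of i] that by (simp add: s1_def)
  then show ?thesis by (simp add: fc_iff fstv_def)
qed
lemma sndv_mem: "v \<in> N n \<Longrightarrow> k = n + 1 \<Longrightarrow> sndv v \<in> P k"
proof -
  assume v: "v \<in> N n" and k: "k = n + 1"
  have "v (i + R) \<in> A (k - s0 i)" if "i < R" for i
    using fc_in[OF v, of "i + R"] that k by (simp add: s1_def algebra_simps)
  then show ?thesis by (simp add: fc_iff sndv_def)
qed
lemma join_mem: "x \<in> P n \<Longrightarrow> y \<in> P (n + 1) \<Longrightarrow> join x y \<in> N n"
  by (auto simp: fc_iff join_def s1_def algebra_simps)
lemma fstv_join: "x \<in> P n \<Longrightarrow> fstv (join x y) = x"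
  by (auto simp: fun_eq_iff fc_iff join_def fstv_def)
lemma sndv_join: "y \<in> P k \<Longrightarrow> sndv (join x y) = y"
  by (auto simp: fun_eq_iff fc_iff join_def sndv_def)
lemma join_fst_snd: "v \<in> N n \<Longrightarrow> join (fstv v) (sndv v) = v"
  by (auto simp: fun_eq_iff fc_iff join_def sndv_def fstv_def)
lemma fstv_add: "fstv (v + w) = fstv v + fstv w"
  by (auto simp: fun_eq_iff fstv_def)
lemma sndv_add: "sndv (v + w) = sndv v + sndv w"
  by (auto simp: fun_eq_iff sndv_def)
lemma fstv_act: "fstv (free_act v a) = free_act (fstv v) a"
  by (auto simp: fun_eq_iff fstv_def free_act_def)
lemma sndv_act: "sndv (free_act v a) = free_act (sndv v) a"
  by (auto simp: fun_eq_iff sndv_def free_act_def)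
lemma join_add: "join (x + x') (y + y') = join x y + join x' y'"
  by (auto simp: fun_eq_iff join_def)
lemma join_act: "join (free_act x a) (free_act y a) = free_act (join x y) a"
  by (auto simp: fun_eq_iff join_def free_act_def)
lemma join_sgnpow: "join (sgnpow k x) (sgnpow k y) = sgnpow k (join x y)"
  by (auto simp: fun_eq_iff join_def sgnpow_def)
lemma join_zero [simp]: "join 0 0 = 0"
  by (auto simp: fun_eq_iff join_def)

definition D where
  "D v = join (nb (fstv v) + epc (sndv v)) (- nb (nb (fstv v)) - nb (sndv v))"

lemma D_mem: "v \<in> N n \<Longrightarrow> k = n + 1 \<Longrightarrow> D v \<in> N k"
proof -
  assume v: "v \<in> N n" and k: "k = n + 1"
  have x: "fstv v \<in> P n" using fstv_mem[OF v] .
  have y: "sndv v \<in> P (n + 1)" using sndv_mem[OF v HOL.refl] .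
  show ?thesis unfolding D_def k
    by (intro join_mem fc_add fc_diff fc_neg nb_mem[OF x HOL.refl] epc_mem[OF y] nb_mem[OF nb_mem[OF x HOL.refl] HOL.refl]
        nb_mem[OF y HOL.refl])
qed

lemma D_add: "v \<in> N n \<Longrightarrow> w \<in> N n \<Longrightarrow> D (v + w) = D v + D w"
proof -
  assume v: "v \<in> N n" and w: "w \<in> N n"
  have x: "fstv v \<in> P n" "fstv w \<in> P n" using fstv_mem v w by auto
  have y: "sndv v \<in> P (n + 1)" "sndv w \<in> P (n + 1)" using sndv_mem v w by auto
  have 1: "nb (fstv (v + w)) = nb (fstv v) + nb (fstv w)"
    by (simp add: fstv_add nb_add[OF x])
  have 2: "nb (nb (fstv v) + nb (fstv w)) = nb (nb (fstv v)) + nb (nb (fstv w))"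
    by (simp add: nb_add[OF nb_mem[OF x(1) HOL.refl] nb_mem[OF x(2) HOL.refl]])
  have 3: "nb (sndv (v + w)) = nb (sndv v) + nb (sndv w)"
    by (simp add: sndv_add nb_add[OF y])
  have 4: "epc (sndv (v + w)) = epc (sndv v) + epc (sndv w)"
    by (simp add: sndv_add epc_add[OF y])
  show ?thesis unfolding D_def 1 2 3 4 join_add[symmetric]
    by (simp add: algebra_simps)
qed

lemma D_D: "v \<in> N n \<Longrightarrow> D (D v) = 0"
proof -
  assume v: "v \<in> N n"
  define x where "x = fstv v"
  define y where "y = sndv v"
  have x: "x \<in> P n" using fstv_mem[OF v] x_def by simp
  have y: "y \<in> P (n + 1)" using sndv_mem[OF v HOL.refl] y_def by simp
  have nx: "nb x \<in> P (n + 1)" using nb_mem[OF x HOL.refl] .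
  have nnx: "nb (nb x) \<in> P (n + 1 + 1)" using nb_mem[OF nx HOL.refl] .
  have ny: "nb y \<in> P (n + 1 + 1)" using nb_mem[OF y HOL.refl] .
  have ey: "epc y \<in> P (n + 1)" using epc_mem[OF y] .
  define x' where "x' = nb x + epc y"
  define y' where "y' = - nb (nb x) - nb y"
  have x': "x' \<in> P (n + 1)" unfolding x'_def using fc_add[OF nx ey] .
  have y': "y' \<in> P (n + 1 + 1)" unfolding y'_def using fc_diff[OF fc_neg[OF nnx] ny] .
  have Dv: "D v = join x' y'" by (simp add: D_def x'_def y'_def x_def y_def)
  have f: "fstv (D v) = x'" using Dv fstv_join[OF x'] by simp
  have s: "sndv (D v) = y'" using Dv sndv_join[OF y'] by simp
  have a: "nb x' = nb (nb x) + epc (nb y)"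
    unfolding x'_def by (simp add: nb_add[OF nx ey] nb_epc[OF y])
  have b: "epc y' = - nb (nb x) - epc (nb y)"
    unfolding y'_def by (simp add: epc_diff[OF fc_neg[OF nnx] ny] epc_neg[OF nnx] epc_nbnb[OF x])
  have nnny: "nb (nb y) \<in> P (n + 1 + 1 + 1)" using nb_mem[OF ny HOL.refl] .
  have nnnx: "nb (nb (nb x)) \<in> P (n + 1 + 1 + 1)" using nb_mem[OF nnx HOL.refl] .
  have eny: "epc (nb y) \<in> P (n + 1 + 1)" using epc_mem[OF ny] .
  have c: "nb (nb x') = nb (nb (nb x)) + epc (nb (nb y))"
    unfolding a by (simp add: nb_add[OF nnx eny] nb_epc[OF ny])
  have d: "nb y' = - nb (nb (nb x)) - nb (nb y)"
    unfolding y'_def by (simp add: nb_diff[OF fc_neg[OF nnx] ny] nb_neg[OF nnx])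
  have e: "nb (nb y) - epc (nb (nb y)) = 0"
    by (simp add: epc_def eps_nbnb[OF y])
  have "D (D v) = join (nb x' + epc y') (- nb (nb x') - nb y')"
    by (simp only: D_def[of "D v"] f s)
  also have "nb x' + epc y' = 0" by (simp add: a b)
  also have "- nb (nb x') - nb y' = 0" using e by (simp add: c d)
  finally show ?thesis using join_zero by (simp add: zero_fun_def)
qed

lemma D_act: "v \<in> N n \<Longrightarrow> a \<in> A q \<Longrightarrow> D (free_act v a) = free_act (D v) a + sgnpow n (free_act v (dA a))"
proof -
  assume v: "v \<in> N n" and a: "a \<in> A q"
  define x where "x = fstv v"
  define y where "y = sndv v"
  have x: "x \<in> P n" using fstv_mem[OF v] x_def by simp
  have y: "y \<in> P (n + 1)" using sndv_mem[OF v HOL.refl] y_def by simp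
  have da: "dA a \<in> A (q + 1)" using dA_mem[OF a HOL.refl] .
  have vj: "v = join x y" using join_fst_snd[OF v] x_def y_def by simp
  have nx: "nb x \<in> P (n + 1)" using nb_mem[OF x HOL.refl] .
  have 1: "nb (free_act x a) = free_act (nb x) a + sgnpow n (free_act x (dA a))"
    using nb_act[OF x a] .
  have m1: "free_act (nb x) a \<in> P (n + q + 1)" by (rule fc_act[OF nx a]) simp
  have m2: "sgnpow n (free_act x (dA a)) \<in> P (n + q + 1)"
    using fc_sgnpow[OF fc_act[OF x da HOL.refl]] by (simp add: add.assoc)
  have m3: "free_act x (dA a) \<in> P (n + q + 1)"
    using fc_act[OF x da HOL.refl] by (simp add: add.assoc)
  have 2: "nb (free_act (nb x) a + sgnpow n (free_act x (dA a))) = free_act (nb (nb x)) a"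
  proof -
    have e1: "nb (free_act (nb x) a + sgnpow n (free_act x (dA a))) = nb (free_act (nb x) a) + sgnpow n (nb (free_act x (dA a)))"
      unfolding nb_add[OF m1 m2] nb_sgnpow[OF m3] ..
    have e2: "nb (free_act (nb x) a) = free_act (nb (nb x)) a + sgnpow (n + 1) (free_act (nb x) (dA a))"
      using nb_act[OF nx a] .
    have e3: "nb (free_act x (dA a)) = free_act (nb x) (dA a)"
      using nb_act[OF x da] dA_dA[OF a] by (simp add: free_act_rzero)
    show ?thesis unfolding e1 e2 e3 sgnpow_succ by simp
  qed
  have 3: "nb (free_act y a) = free_act (nb y) a + sgnpow (n + 1) (free_act y (dA a))"
    using nb_act[OF y a] .
  have fx: "fstv (free_act v a) = free_act x a" by (simp add: fstv_act x_def)
  have sy: "sndv (free_act v a) = free_act y a" by (simp add: sndv_act y_def)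
  have "D (free_act v a) = join (nb (free_act x a) + epc (free_act y a)) (- nb (nb (free_act x a)) - nb (free_act y a))"
    by (simp only: D_def fx sy)
  also have "\<dots> = join (free_act (nb x) a + sgnpow n (free_act x (dA a)) + free_act (epc y) a)
       (- free_act (nb (nb x)) a - (free_act (nb y) a + sgnpow (n + 1) (free_act y (dA a))))"
    by (simp only: 1 2 3 epc_act[OF y a])
  also have "\<dots> = join (free_act (nb x + epc y) a) (free_act (- nb (nb x) - nb y) a)
      + join (sgnpow n (free_act x (dA a))) (sgnpow n (free_act y (dA a)))"
    by (simp add: join_add[symmetric] free_act_add free_act_diff free_act_minus sgnpow_succ sgnpow_succ' algebra_simps)
  also have "\<dots> = free_act (D v) a + sgnpow n (free_act v (dA a))"
    by (simp add: join_act join_sgnpow D_def x_def y_def join_fst_snd[OF v])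
  finally show ?thesis .
qed

definition ff where "ff m = join (\<Phi> m) 0"
definition gg where "gg v = \<Gamma> (fstv v)"

theorem retract: "retract_of_free A dA M actM dM (2 * R) s1 D"
  unfolding retract_of_free_def
proof (intro conjI exI)
  show "dg_rmodule A dA (free_comp A (2 * R) s1) free_act D"
    unfolding dg_rmodule_def
    by (intro conjI fc_rmod allI ballI D_mem[OF _ HOL.refl] D_add D_D D_act)
  show "dg_hom A M actM dM (free_comp A (2 * R) s1) free_act D ff"
    unfolding dg_hom_def
  proof (intro conjI allI ballI)
    fix n m assume m: "m \<in> M n"
    show "ff m \<in> N n" unfolding ff_def by (intro join_mem \<Phi>_mem[OF m] fc_zero)
    show "ff (dM m) = D (ff m)"
      unfolding ff_def D_def
      using fstv_join[OF \<Phi>_mem[OF m]] sndv_join[OF fc_zero]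
      by (simp add: nb_\<Phi>[OF m] nb_\<Phi>[OF dM_mem[OF m HOL.refl]] dM_dM[OF m])
    fix m' assume m': "m' \<in> M n"
    show "ff (m + m') = ff m + ff m'"
      unfolding ff_def by (simp add: \<Phi>_add[OF m m'] join_add[symmetric])
  next
    fix n q m a assume m: "m \<in> M n" and a: "a \<in> A q"
    show "ff (actM m a) = free_act (ff m) a"
      unfolding ff_def by (simp add: \<Phi>_act[OF m a] join_act[symmetric])
  qed
  show "dg_hom A (free_comp A (2 * R) s1) free_act D M actM dM gg"
    unfolding dg_hom_def
  proof (intro conjI allI ballI)
    fix n v assume v: "v \<in> N n"
    show "gg v \<in> M n" unfolding gg_def by (rule \<Gamma>_mem[OF fstv_mem[OF v]])
    fix w assume w: "w \<in> N n"
    show "gg (v + w) = gg v + gg w"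
      unfolding gg_def by (simp add: fstv_add \<Gamma>_add[OF fstv_mem[OF v] fstv_mem[OF w]])
  next
    fix n v assume v: "v \<in> N n"
    have x: "fstv v \<in> P n" using fstv_mem[OF v] .
    have y: "sndv v \<in> P (n + 1)" using sndv_mem[OF v HOL.refl] .
    have "gg (D v) = \<Gamma> (nb (fstv v) + epc (sndv v))"
      unfolding gg_def D_def using fstv_join[OF fc_add[OF nb_mem[OF x HOL.refl] epc_mem[OF y]]] by simp
    also have "\<dots> = \<Gamma> (nb (fstv v)) + \<Gamma> (epc (sndv v))"
      using \<Gamma>_add[OF nb_mem[OF x HOL.refl] epc_mem[OF y]] .
    also have "\<dots> = dM (gg v)" by (simp add: \<Gamma>_nb[OF x] \<Gamma>_epc[OF y] gg_def)
    finally show "gg (D v) = dM (gg v)" .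
  next
    fix n q v a assume v: "v \<in> N n" and a: "a \<in> A q"
    show "gg (free_act v a) = actM (gg v) a"
      unfolding gg_def by (simp add: fstv_act \<Gamma>_act[OF fstv_mem[OF v] a])
  qed
  show "\<forall>n. \<forall>m\<in>M n. gg (ff m) = m"
    by (simp add: gg_def ff_def fstv_join[OF \<Phi>_mem] \<Gamma>\<Phi>)
qed

end



locale cohes = dgmod \<kappa> A dA M actM dM
  for \<kappa> :: "'k::comm_ring_1 \<Rightarrow> 'a::ring_1" and A dA
    and M :: "int \<Rightarrow> 'm::ab_group_add set" and actM dM +
  fixes E :: "int \<Rightarrow> 'e::ab_group_add set" and actE :: "'e \<Rightarrow> 'a \<Rightarrow> 'e" and \<psi> :: "'e \<Rightarrow> 'a \<Rightarrow> 'm"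
  assumes coh: "cohesive_via A M actM E actE \<psi>"
begin

lemma E_rmod: "graded_rmod0 A E actE"
  using coh by (simp add: cohesive_via_def)
lemma E_sub: "subgrp (E p)"
  using E_rmod by (simp add: graded_rmod0_def graded_group_def)
lemma E_indep: "grade_indep E"
  using E_rmod by (simp add: graded_rmod0_def graded_group_def)
lemma E_zero [simp]: "0 \<in> E p"
  using E_sub subgrp_zero by blast
lemma E_add: "x \<in> E p \<Longrightarrow> y \<in> E p \<Longrightarrow> x + y \<in> E p"
  using E_sub subgrp_add by blast
lemma E_sum: "(\<And>i. i \<in> I \<Longrightarrow> f i \<in> E p) \<Longrightarrow> sum f I \<in> E p"
  using subgrp_sum[OF E_sub] .
lemma actE_mem: "e \<in> E p \<Longrightarrow> r \<in> A 0 \<Longrightarrow> actE e r \<in> E p"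
  using E_rmod by (simp add: graded_rmod0_def)
lemma actE_addl: "e \<in> E p \<Longrightarrow> e' \<in> E p \<Longrightarrow> r \<in> A 0 \<Longrightarrow> actE (e + e') r = actE e r + actE e' r"
  using E_rmod by (simp add: graded_rmod0_def)
lemma actE_addr: "e \<in> E p \<Longrightarrow> r \<in> A 0 \<Longrightarrow> r' \<in> A 0 \<Longrightarrow> actE e (r + r') = actE e r + actE e r'"
  using E_rmod by (simp add: graded_rmod0_def)
lemma actE_rzero: "e \<in> E p \<Longrightarrow> actE e 0 = 0"
proof -
  assume e: "e \<in> E p"
  have "actE e (0 + 0) = actE e 0 + actE e 0" using actE_addr[OF e A_zero A_zero] .
  then show ?thesis by simp
qed
lemma actE_lzero: "r \<in> A 0 \<Longrightarrow> actE 0 r = 0"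
proof -
  assume r: "r \<in> A 0"
  have "actE (0 + 0) r = actE 0 r + actE 0 r" using actE_addl[OF E_zero E_zero r] .
  then show ?thesis by simp
qed
lemma E_unique: "e \<in> E p \<Longrightarrow> e \<in> E q \<Longrightarrow> p \<noteq> q \<Longrightarrow> e = 0"
proof -
  assume e: "e \<in> E p" "e \<in> E q" and pq: "p \<noteq> q"
  define c where "c n = (if n = p then e else - e)" for n
  have "\<forall>n\<in>{p, q}. c n \<in> E n"
    using e pq by (auto simp: c_def intro: subgrp_neg[OF E_sub])
  moreover have "sum c {p, q} = 0" using pq by (simp add: c_def)
  ultimately have "\<forall>n\<in>{p, q}. c n = 0"
    using E_indep unfolding grade_indep_def by (meson finite.emptyI finite_insert)
  then show ?thesis by (simp add: c_def)
qed

lemma tiso: "tensor_iso E actE A M actM \<psi>"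
  using coh by (simp add: cohesive_via_def)

lemma tens_single [simp]: "tens_val \<psi> {#x#} = \<psi> (fst x) (snd x)"
  by (simp add: tens_val_def)
lemma tens_add_mset [simp]: "tens_val \<psi> (add_mset x X) = \<psi> (fst x) (snd x) + tens_val \<psi> X"
  by (simp add: tens_val_def)
lemma tens_union [simp]: "tens_val \<psi> (X + Y) = tens_val \<psi> X + tens_val \<psi> Y"
  by (simp add: tens_val_def)
lemma tens_empty [simp]: "tens_val \<psi> {#} = 0"
  by (simp add: tens_val_def)

lemma M_eq: "M n = tens_val \<psi> ` tensor_part E A n"
  using tiso by (simp add: tensor_iso_def)
lemma tens_iff: "X \<in> tensor_all E A \<Longrightarrow> Y \<in> tensor_all E A \<Longrightarrow>
    tens_val \<psi> X = tens_val \<psi> Y \<longleftrightarrow> tcong E actE A X Y"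
  using tiso by (simp add: tensor_iso_def)
lemma psi_act: "e \<in> E p \<Longrightarrow> a \<in> A q \<Longrightarrow> b \<in> A s \<Longrightarrow> actM (\<psi> e a) b = \<psi> e (a * b)"
  using tiso by (simp add: tensor_iso_def)

lemma part_all: "X \<in> tensor_part E A n \<Longrightarrow> X \<in> tensor_all E A"
  by (auto simp: tensor_part_def tensor_all_def)
lemma all_single: "e \<in> E p \<Longrightarrow> a \<in> A q \<Longrightarrow> {#(e, a)#} \<in> tensor_all E A"
  by (auto simp: tensor_all_def)
lemma all_two: "e \<in> E p \<Longrightarrow> a \<in> A q \<Longrightarrow> e' \<in> E p' \<Longrightarrow> a' \<in> A q' \<Longrightarrow> {#(e, a), (e', a')#} \<in> tensor_all E A"
  by (auto simp: tensor_all_def)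

lemma psi_mem: "e \<in> E p \<Longrightarrow> a \<in> A q \<Longrightarrow> k = p + q \<Longrightarrow> \<psi> e a \<in> M k"
proof -
  assume e: "e \<in> E p" and a: "a \<in> A q" and k: "k = p + q"
  have "{#(e, a)#} \<in> tensor_part E A k" using e a k by (auto simp: tensor_part_def)
  then have "tens_val \<psi> {#(e, a)#} \<in> M k" unfolding M_eq by blast
  then show ?thesis by simp
qed

lemma psi_addl: "e \<in> E p \<Longrightarrow> e' \<in> E p \<Longrightarrow> a \<in> A q \<Longrightarrow> \<psi> (e + e') a = \<psi> e a + \<psi> e' a"
proof -
  assume e: "e \<in> E p" and e': "e' \<in> E p" and a: "a \<in> A q"
  have "tcong E actE A {#(e + e', a)#} {#(e, a), (e', a)#}" using e e' a by (rule tcong.add_l)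
  then have "tens_val \<psi> {#(e + e', a)#} = tens_val \<psi> {#(e, a), (e', a)#}"
    using tens_iff[OF all_single[OF E_add[OF e e'] a] all_two[OF e a e' a]] by blast
  then show ?thesis by simp
qed
lemma psi_addr: "e \<in> E p \<Longrightarrow> a \<in> A q \<Longrightarrow> a' \<in> A q \<Longrightarrow> \<psi> e (a + a') = \<psi> e a + \<psi> e a'"
proof -
  assume e: "e \<in> E p" and a: "a \<in> A q" and a': "a' \<in> A q"
  have "tcong E actE A {#(e, a + a')#} {#(e, a), (e, a')#}" using e a a' by (rule tcong.add_r)
  then have "tens_val \<psi> {#(e, a + a')#} = tens_val \<psi> {#(e, a), (e, a')#}"
    using tens_iff[OF all_single[OF e A_add[OF a a']] all_two[OF e a e a']] by blast
  then show ?thesis by simp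
qed
lemma psi_zl: "a \<in> A q \<Longrightarrow> \<psi> 0 a = 0"
proof -
  assume a: "a \<in> A q"
  have "tcong E actE A {#(0, a)#} {#}" using a by (rule tcong.zero_l)
  then have "tens_val \<psi> {#(0, a)#} = tens_val \<psi> {#}"
    using tens_iff[OF all_single[OF E_zero a], of "{#}"] by (simp add: tensor_all_def)
  then show ?thesis by simp
qed
lemma psi_zr: "e \<in> E p \<Longrightarrow> \<psi> e 0 = 0"
proof -
  assume e: "e \<in> E p"
  have "tcong E actE A {#(e, 0)#} {#}" using e by (rule tcong.zero_r)
  then have "tens_val \<psi> {#(e, 0)#} = tens_val \<psi> {#}"
    using tens_iff[OF all_single[OF e A_zero[of 0]], of "{#}"] by (simp add: tensor_all_def)
  then show ?thesis by simp
qed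
lemma psi_bal: "e \<in> E p \<Longrightarrow> r \<in> A 0 \<Longrightarrow> a \<in> A q \<Longrightarrow> \<psi> (actE e r) a = \<psi> e (r * a)"
proof -
  assume e: "e \<in> E p" and r: "r \<in> A 0" and a: "a \<in> A q"
  have "tcong E actE A {#(actE e r, a)#} {#(e, r * a)#}" using e r a by (rule tcong.bal)
  then have "tens_val \<psi> {#(actE e r, a)#} = tens_val \<psi> {#(e, r * a)#}"
    using tens_iff[OF all_single[OF actE_mem[OF e r] a] all_single[OF e A_mult[OF r a HOL.refl]]] by blast
  then show ?thesis by simp
qed
lemma psi_suml: "finite I \<Longrightarrow> (\<And>i. i \<in> I \<Longrightarrow> f i \<in> E p) \<Longrightarrow> a \<in> A q \<Longrightarrow>
    \<psi> (sum f I) a = (\<Sum>i\<in>I. \<psi> (f i) a)"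
proof (induction I rule: finite_induct)
  case empty
  then show ?case by (simp add: psi_zl)
next
  case (insert x F)
  have fx: "f x \<in> E p" using insert by simp
  have fF: "sum f F \<in> E p" using insert by (intro E_sum) simp
  have "\<psi> (sum f (insert x F)) a = \<psi> (f x + sum f F) a" using insert by simp
  also have "\<dots> = \<psi> (f x) a + \<psi> (sum f F) a" by (rule psi_addl[OF fx fF insert(5)])
  finally show ?case using insert by simp
qed

lemma M_repr: "m \<in> M n \<Longrightarrow> \<exists>X\<in>tensor_part E A n. tens_val \<psi> X = m"
  using M_eq by auto

end


locale cohesB = cohes \<kappa> A dA M actM dM E actE \<psi>
  for \<kappa> :: "'k::comm_ring_1 \<Rightarrow> 'a::ring_1" and A dA
    and M :: "int \<Rightarrow> 'm::ab_group_add set" and actM dM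
    and E :: "int \<Rightarrow> 'e::ab_group_add set" and actE \<psi> +
  fixes R :: nat and s0 :: "nat \<Rightarrow> int" and b :: "nat \<Rightarrow> 'e" and co :: "'e \<Rightarrow> nat \<Rightarrow> 'a"
  assumes B1: "i < R \<Longrightarrow> b i \<in> E (s0 i)"
    and B2a: "e \<in> E p \<Longrightarrow> co e i \<in> A 0"
    and B2b: "e \<in> E p \<Longrightarrow> R \<le> i \<or> s0 i \<noteq> p \<Longrightarrow> co e i = 0"
    and B3: "e \<in> E p \<Longrightarrow> e' \<in> E p \<Longrightarrow> co (e + e') = co e + co e'"
    and B4: "e \<in> E p \<Longrightarrow> r \<in> A 0 \<Longrightarrow> co (actE e r) = free_act (co e) r"
    and B5: "e \<in> E p \<Longrightarrow> e = (\<Sum>i\<in>{i. i < R \<and> s0 i = p}. actE (b i) (co e i))"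
begin

abbreviation PP where "PP n \<equiv> free_comp A R s0 n"

lemma co_zero [simp]: "co 0 = 0"
proof -
  have "co (0 + 0) = co 0 + co 0" using B3[OF E_zero E_zero] .
  then show ?thesis by simp
qed

definition cval :: "('e \<times> 'a) multiset \<Rightarrow> nat \<Rightarrow> 'a" where
  "cval X = sum_mset (image_mset (\<lambda>x. free_act (co (fst x)) (snd x)) X)"

lemma cval_empty [simp]: "cval {#} = 0"
  by (simp add: cval_def)
lemma cval_add_mset [simp]: "cval (add_mset x X) = free_act (co (fst x)) (snd x) + cval X"
  by (simp add: cval_def)
lemma cval_union [simp]: "cval (X + Y) = cval X + cval Y"
  by (simp add: cval_def)

lemma cval_cong: "tcong E actE A X Y \<Longrightarrow> cval X = cval Y"
proof (induction rule: tcong.induct)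
  case (add_l e p e' a q)
  then show ?case by (simp add: B3 free_act_add)
next
  case (add_r e p a q a')
  then show ?case by (simp add: free_act_radd)
next
  case (bal e p r a q)
  then show ?case by (simp add: B4 free_act_assoc)
qed simp_all

definition \<Phi>c where "\<Phi>c m = cval (SOME X. X \<in> tensor_all E A \<and> tens_val \<psi> X = m)"
definition \<Gamma>c where "\<Gamma>c v = (\<Sum>i<R. \<psi> (b i) (v i))"

lemma \<Phi>c_eq: "X \<in> tensor_all E A \<Longrightarrow> \<Phi>c (tens_val \<psi> X) = cval X"
proof -
  assume X: "X \<in> tensor_all E A"
  define Y where "Y = (SOME Y. Y \<in> tensor_all E A \<and> tens_val \<psi> Y = tens_val \<psi> X)"
  have Y: "Y \<in> tensor_all E A \<and> tens_val \<psi> Y = tens_val \<psi> X"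
    unfolding Y_def by (rule someI[of _ X]) (simp add: X)
  then have "tcong E actE A Y X" using tens_iff[OF _ X] by blast
  then have "cval Y = cval X" by (rule cval_cong)
  then show ?thesis by (simp add: \<Phi>c_def Y_def)
qed

lemma term_mem: "e \<in> E p \<Longrightarrow> a \<in> A q \<Longrightarrow> k = p + q \<Longrightarrow> free_act (co e) a \<in> PP k"
proof -
  assume e: "e \<in> E p" and a: "a \<in> A q" and k: "k = p + q"
  have "co e i * a \<in> A (k - s0 i)" if "i < R" for i
  proof (cases "s0 i = p")
    case True
    then show ?thesis using A_mult[OF B2a[OF e] a] k by simp
  next
    case False
    then show ?thesis using B2b[OF e] by simp
  qed
  moreover have "co e i * a = 0" if "R \<le> i" for i using B2b[OF e] that by simp
  ultimately show ?thesis by (simp add: fc_iff free_act_def)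
qed

lemma part_add_mset: "add_mset x X \<in> tensor_part E A n \<Longrightarrow> X \<in> tensor_part E A n"
  by (simp add: tensor_part_def)
lemma part_add_mset_hd: "add_mset x X \<in> tensor_part E A n \<Longrightarrow> \<exists>p q. p + q = n \<and> fst x \<in> E p \<and> snd x \<in> A q"
  by (simp add: tensor_part_def)

lemma cval_mem: "X \<in> tensor_part E A n \<Longrightarrow> cval X \<in> PP n"
proof (induction X rule: multiset_induct)
  case empty
  show ?case by (simp only: cval_empty fc_zero)
next
  case (add x X)
  obtain p q where pq: "p + q = n" "fst x \<in> E p" "snd x \<in> A q" using part_add_mset_hd[OF add.prems] by blast
  show ?case unfolding cval_add_mset by (rule fc_add[OF term_mem[OF pq(2,3) pq(1)[symmetric]] add.IH[OF part_add_mset[OF add.prems]]])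
qed

lemma tens_mem: "X \<in> tensor_part E A n \<Longrightarrow> tens_val \<psi> X \<in> M n"
  using M_eq by auto

lemma \<Phi>c_mem: "m \<in> M n \<Longrightarrow> \<Phi>c m \<in> PP n"
  using M_repr \<Phi>c_eq part_all cval_mem by metis

lemma \<Phi>c_add: "m \<in> M n \<Longrightarrow> m' \<in> M n \<Longrightarrow> \<Phi>c (m + m') = \<Phi>c m + \<Phi>c m'"
proof -
  assume m: "m \<in> M n" and m': "m' \<in> M n"
  obtain X where X: "X \<in> tensor_part E A n" "tens_val \<psi> X = m" using M_repr[OF m] by blast
  obtain Y where Y: "Y \<in> tensor_part E A n" "tens_val \<psi> Y = m'" using M_repr[OF m'] by blast
  have XY: "X + Y \<in> tensor_all E A" using X(1) Y(1) by (auto simp: tensor_part_def tensor_all_def)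
  have "\<Phi>c (m + m') = \<Phi>c (tens_val \<psi> (X + Y))" using X Y by simp
  also have "\<dots> = cval X + cval Y" using \<Phi>c_eq[OF XY] by simp
  also have "\<dots> = \<Phi>c m + \<Phi>c m'" using \<Phi>c_eq[OF part_all[OF X(1)]] \<Phi>c_eq[OF part_all[OF Y(1)]] X Y by simp
  finally show ?thesis .
qed

definition rmap where "rmap a X = image_mset (\<lambda>x. (fst x, snd x * a)) X"

lemma tens_act: "X \<in> tensor_part E A n \<Longrightarrow> a \<in> A q \<Longrightarrow> actM (tens_val \<psi> X) a = tens_val \<psi> (rmap a X)"
proof (induction X rule: multiset_induct)
  case empty
  then show ?case by (simp add: rmap_def act_zero)
next
  case (add x X)
  obtain p q' where pq: "p + q' = n" "fst x \<in> E p" "snd x \<in> A q'" using part_add_mset_hd[OF add.prems(1)] by blast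
  have X: "X \<in> tensor_part E A n" using part_add_mset[OF add.prems(1)] .
  have "actM (tens_val \<psi> (add_mset x X)) a = actM (\<psi> (fst x) (snd x) + tens_val \<psi> X) a" by simp
  also have "\<dots> = actM (\<psi> (fst x) (snd x)) a + actM (tens_val \<psi> X) a"
    by (rule act_add[OF psi_mem[OF pq(2,3) pq(1)[symmetric]] tens_mem[OF X] add.prems(2)])
  also have "\<dots> = \<psi> (fst x) (snd x * a) + tens_val \<psi> (rmap a X)"
    using psi_act[OF pq(2,3) add.prems(2)] add.IH[OF X add.prems(2)] by simp
  finally show ?case by (simp add: rmap_def)
qed

lemma rmap_all:
  assumes X: "X \<in> tensor_all E A" and a: "a \<in> A q"
  shows "rmap a X \<in> tensor_all E A"
proof -
  have "\<exists>p q'. fst x \<in> E p \<and> snd x * a \<in> A q'" if xX: "x \<in># X" for x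
  proof -
    obtain p q' where "fst x \<in> E p" "snd x \<in> A q'" using X xX by (auto simp: tensor_all_def)
    moreover have "snd x * a \<in> A (q' + q)" by (rule A_mult[OF \<open>snd x \<in> A q'\<close> a HOL.refl])
    ultimately show ?thesis by blast
  qed
  then show ?thesis by (auto simp: tensor_all_def rmap_def)
qed

lemma cval_rmap: "cval (rmap a X) = free_act (cval X) a"
  by (induction X rule: multiset_induct) (simp_all add: rmap_def free_act_def fun_eq_iff distrib_right mult.assoc)

lemma \<Phi>c_act: "m \<in> M n \<Longrightarrow> a \<in> A q \<Longrightarrow> \<Phi>c (actM m a) = free_act (\<Phi>c m) a"
proof -
  assume m: "m \<in> M n" and a: "a \<in> A q"
  obtain X where X: "X \<in> tensor_part E A n" "tens_val \<psi> X = m" using M_repr[OF m] by blast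
  have "\<Phi>c (actM m a) = \<Phi>c (tens_val \<psi> (rmap a X))" using tens_act[OF X(1) a] X(2) by simp
  also have "\<dots> = cval (rmap a X)" by (rule \<Phi>c_eq[OF rmap_all[OF part_all[OF X(1)] a]])
  also have "\<dots> = free_act (\<Phi>c m) a" using \<Phi>c_eq[OF part_all[OF X(1)]] X(2) by (simp add: cval_rmap)
  finally show ?thesis .
qed

lemma \<Gamma>c_mem1: "v \<in> PP n \<Longrightarrow> i < R \<Longrightarrow> \<psi> (b i) (v i) \<in> M n"
proof -
  assume v: "v \<in> PP n" and i: "i < R"
  have "b i \<in> E (s0 i)" "v i \<in> A (n - s0 i)" using B1 fc_in[OF v] i by auto
  then show "\<psi> (b i) (v i) \<in> M n"
    by (rule psi_mem) simp
qed

lemma \<Gamma>c_mem: "v \<in> PP n \<Longrightarrow> \<Gamma>c v \<in> M n"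
  unfolding \<Gamma>c_def
proof (rule M_sum)
  fix i assume v: "v \<in> PP n" and i: "i \<in> {..<R}"
  have "b i \<in> E (s0 i)" "v i \<in> A (n - s0 i)" using B1 fc_in[OF v] i by auto
  then show "\<psi> (b i) (v i) \<in> M n"
    by (rule psi_mem) simp
qed

lemma \<Gamma>c_add: "v \<in> PP n \<Longrightarrow> w \<in> PP n \<Longrightarrow> \<Gamma>c (v + w) = \<Gamma>c v + \<Gamma>c w"
proof -
  assume v: "v \<in> PP n" and w: "w \<in> PP n"
  have "\<psi> (b i) ((v + w) i) = \<psi> (b i) (v i) + \<psi> (b i) (w i)" if i: "i \<in> {..<R}" for i
  proof -
    have "b i \<in> E (s0 i)" "v i \<in> A (n - s0 i)" "w i \<in> A (n - s0 i)" using B1 fc_in[OF v] fc_in[OF w] i by auto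
    then show ?thesis by (simp add: psi_addr)
  qed
  then show ?thesis unfolding \<Gamma>c_def by (simp add: sum.distrib[symmetric])
qed

lemma \<Gamma>c_act: "v \<in> PP n \<Longrightarrow> a \<in> A q \<Longrightarrow> \<Gamma>c (free_act v a) = actM (\<Gamma>c v) a"
proof -
  assume v: "v \<in> PP n" and a: "a \<in> A q"
  have "actM (\<Gamma>c v) a = (\<Sum>i<R. actM (\<psi> (b i) (v i)) a)"
    unfolding \<Gamma>c_def
    by (rule act_sum[OF _ a]) (use \<Gamma>c_mem1[OF v] in auto)
  also have "\<dots> = (\<Sum>i<R. \<psi> (b i) (v i * a))"
    by (rule sum.cong) (auto intro: psi_act[OF B1 fc_in[OF v _ HOL.refl] a])
  finally show ?thesis by (simp add: \<Gamma>c_def free_act_def)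
qed

lemma key: "e \<in> E p \<Longrightarrow> a \<in> A q \<Longrightarrow> \<Gamma>c (free_act (co e) a) = \<psi> e a"
proof -
  assume e: "e \<in> E p" and a: "a \<in> A q"
  define S where "S = {i. i < R \<and> s0 i = p}"
  have "\<Gamma>c (free_act (co e) a) = (\<Sum>i<R. \<psi> (actE (b i) (co e i)) a)"
    unfolding \<Gamma>c_def free_act_def
    by (rule sum.cong) (auto simp: psi_bal[OF B1 B2a[OF e] a])
  also have "\<dots> = (\<Sum>i\<in>S. \<psi> (actE (b i) (co e i)) a)"
  proof (rule sum.mono_neutral_right)
    show "finite {..<R}" by simp
    show "S \<subseteq> {..<R}" by (auto simp: S_def)
    show "\<forall>i\<in>{..<R} - S. \<psi> (actE (b i) (co e i)) a = 0"
      using B2b[OF e] by (auto simp: S_def actE_rzero[OF B1] psi_zl[OF a])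
  qed
  also have "\<dots> = \<psi> (\<Sum>i\<in>S. actE (b i) (co e i)) a"
    by (rule psi_suml[of _ _ p, symmetric]) (auto simp: S_def intro: actE_mem[OF _ B2a[OF e]] B1 a)
  also have "\<dots> = \<psi> e a" using B5[OF e] by (simp add: S_def)
  finally show ?thesis .
qed

lemma \<Gamma>c_cval: "X \<in> tensor_part E A n \<Longrightarrow> \<Gamma>c (cval X) = tens_val \<psi> X"
proof (induction X rule: multiset_induct)
  case empty
  show ?case unfolding cval_empty tens_empty \<Gamma>c_def by (rule sum.neutral) (simp add: psi_zr[OF B1])
next
  case (add x X)
  obtain p q where pq: "p + q = n" "fst x \<in> E p" "snd x \<in> A q" using part_add_mset_hd[OF add.prems] by blast
  have X: "X \<in> tensor_part E A n" using part_add_mset[OF add.prems] .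
  have "\<Gamma>c (cval (add_mset x X)) = \<Gamma>c (free_act (co (fst x)) (snd x)) + \<Gamma>c (cval X)"
    unfolding cval_add_mset by (rule \<Gamma>c_add[OF term_mem[OF pq(2,3) pq(1)[symmetric]] cval_mem[OF X]])
  then show ?case by (simp only: tens_add_mset key[OF pq(2,3)] add.IH[OF X])
qed

lemma \<Gamma>\<Phi>c: "m \<in> M n \<Longrightarrow> \<Gamma>c (\<Phi>c m) = m"
  using M_repr \<Phi>c_eq part_all \<Gamma>c_cval by metis

theorem exists_retract: "\<exists>r s dF. retract_of_free A dA M actM dM r s dF"
proof -
  interpret absret \<kappa> A dA M actM dM R s0 \<Phi>c \<Gamma>c
    by unfold_locales (fact \<Phi>c_mem \<Phi>c_add \<Phi>c_act \<Gamma>c_mem \<Gamma>c_add \<Gamma>c_act \<Gamma>\<Phi>c)+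
  show ?thesis using retract by blast
qed

end


definition fgdat ::
  "(int \<Rightarrow> 'a::ring_1 set) \<Rightarrow> 'e::ab_group_add set \<Rightarrow> ('e \<Rightarrow> 'a \<Rightarrow> 'e) \<Rightarrow> nat \<Rightarrow>
    ('e \<Rightarrow> nat \<Rightarrow> 'a) \<Rightarrow> ((nat \<Rightarrow> 'a) \<Rightarrow> 'e) \<Rightarrow> bool" where
  "fgdat A P actE r \<iota> \<pi> \<longleftrightarrow>
        (\<forall>e\<in>P. \<iota> e \<in> free_comp A r (\<lambda>_. 0) 0) \<and>
        (\<forall>e\<in>P. \<forall>e'\<in>P. \<iota> (e + e') = \<iota> e + \<iota> e') \<and>
        (\<forall>e\<in>P. \<forall>s\<in>A 0. \<iota> (actE e s) = free_act (\<iota> e) s) \<and>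
        (\<forall>v\<in>free_comp A r (\<lambda>_. 0) 0. \<pi> v \<in> P) \<and>
        (\<forall>v\<in>free_comp A r (\<lambda>_. 0) 0. \<forall>w\<in>free_comp A r (\<lambda>_. 0) 0. \<pi> (v + w) = \<pi> v + \<pi> w) \<and>
        (\<forall>v\<in>free_comp A r (\<lambda>_. 0) 0. \<forall>s\<in>A 0. \<pi> (free_act v s) = actE (\<pi> v) s) \<and>
        (\<forall>e\<in>P. \<pi> (\<iota> e) = e)"

lemma fg_projective_iff: "fg_projective A P actE \<longleftrightarrow> (\<exists>r \<iota> \<pi>. fgdat A P actE r \<iota> \<pi>)"
  by (simp add: fg_projective_def fgdat_def Let_def)

definition delta :: "nat \<Rightarrow> nat \<Rightarrow> 'a::ring_1" where
  "delta j = (\<lambda>t. if t = j then 1 else 0)"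

context dga
begin

lemma delta_mem: "j < r \<Longrightarrow> delta j \<in> free_comp A r (\<lambda>_. 0) 0"
  by (auto simp: fc_iff delta_def A_one)

lemma fc_decomp: "v \<in> free_comp A r (\<lambda>_. 0) 0 \<Longrightarrow> v = (\<Sum>j<r. free_act (delta j) (v j))"
proof (rule ext)
  fix t assume v: "v \<in> free_comp A r (\<lambda>_. 0) 0"
  have "(\<Sum>j<r. free_act (delta j) (v j)) t = (\<Sum>j<r. delta j t * v j)"
    by (simp add: sum_fun_apply free_act_def)
  also have "\<dots> = (\<Sum>j<r. if t = j then v j else 0)"
    by (rule sum.cong) (auto simp: delta_def)
  also have "\<dots> = (if t \<in> {..<r} then v t else 0)"
    by (rule sum.delta') simp
  also have "\<dots> = v t" using v by (simp add: fc_iff)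
  finally show "v t = (\<Sum>j<r. free_act (delta j) (v j)) t" by simp
qed

end

context cohes
begin

lemma fgd_\<iota>_mem: "fgdat A P actE r \<iota> \<pi> \<Longrightarrow> e \<in> P \<Longrightarrow> \<iota> e \<in> free_comp A r (\<lambda>_. 0) 0"
  by (simp add: fgdat_def)
lemma fgd_\<iota>_add: "fgdat A P actE r \<iota> \<pi> \<Longrightarrow> e \<in> P \<Longrightarrow> e' \<in> P \<Longrightarrow> \<iota> (e + e') = \<iota> e + \<iota> e'"
  by (simp add: fgdat_def)
lemma fgd_\<iota>_act: "fgdat A P actE r \<iota> \<pi> \<Longrightarrow> e \<in> P \<Longrightarrow> s \<in> A 0 \<Longrightarrow> \<iota> (actE e s) = free_act (\<iota> e) s"
  by (simp add: fgdat_def)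
lemma fgd_\<pi>_mem: "fgdat A P actE r \<iota> \<pi> \<Longrightarrow> v \<in> free_comp A r (\<lambda>_. 0) 0 \<Longrightarrow> \<pi> v \<in> P"
  by (simp add: fgdat_def)
lemma fgd_\<pi>_add: "fgdat A P actE r \<iota> \<pi> \<Longrightarrow> v \<in> free_comp A r (\<lambda>_. 0) 0 \<Longrightarrow> w \<in> free_comp A r (\<lambda>_. 0) 0 \<Longrightarrow> \<pi> (v + w) = \<pi> v + \<pi> w"
  by (simp add: fgdat_def)
lemma fgd_\<pi>_act: "fgdat A P actE r \<iota> \<pi> \<Longrightarrow> v \<in> free_comp A r (\<lambda>_. 0) 0 \<Longrightarrow> s \<in> A 0 \<Longrightarrow> \<pi> (free_act v s) = actE (\<pi> v) s"
  by (simp add: fgdat_def)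
lemma fgd_\<pi>\<iota>: "fgdat A P actE r \<iota> \<pi> \<Longrightarrow> e \<in> P \<Longrightarrow> \<pi> (\<iota> e) = e"
  by (simp add: fgdat_def)

lemma fgd_\<iota>0: "fgdat A P actE r \<iota> \<pi> \<Longrightarrow> 0 \<in> P \<Longrightarrow> \<iota> 0 = 0"
proof -
  assume f: "fgdat A P actE r \<iota> \<pi>" and z: "0 \<in> P"
  have "\<iota> (0 + 0) = \<iota> 0 + \<iota> 0" using fgd_\<iota>_add[OF f z z] .
  then show ?thesis by simp
qed
lemma fgd_\<pi>0: "fgdat A P actE r \<iota> \<pi> \<Longrightarrow> \<pi> 0 = 0"
proof -
  assume f: "fgdat A P actE r \<iota> \<pi>"
  have "\<pi> (0 + 0) = \<pi> 0 + \<pi> 0" using fgd_\<pi>_add[OF f fc_zero fc_zero] .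
  then show ?thesis by simp
qed
lemma fgd_\<pi>_sum:
  assumes f: "fgdat A P actE r \<iota> \<pi>"
  shows "finite J \<Longrightarrow> (\<And>j. j \<in> J \<Longrightarrow> f j \<in> free_comp A r (\<lambda>_. 0) 0) \<Longrightarrow>
    \<pi> (sum f J) = (\<Sum>j\<in>J. \<pi> (f j))"
proof (induction J rule: finite_induct)
  case empty
  show ?case by (simp only: sum.empty fgd_\<pi>0[OF f])
next
  case (insert x F)
  have "\<pi> (sum f (insert x F)) = \<pi> (f x + sum f F)" by (simp only: sum.insert[OF insert.hyps])
  also have "\<dots> = \<pi> (f x) + \<pi> (sum f F)"
    by (rule fgd_\<pi>_add[OF f]) (use insert.prems in \<open>auto intro: fc_sum\<close>)
  also have "\<pi> (sum f F) = (\<Sum>j\<in>F. \<pi> (f j))" using insert.IH insert.prems by blast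
  finally show ?case by (simp only: sum.insert[OF insert.hyps])
qed
lemma fgd_\<pi>_decomp: "fgdat A P actE r \<iota> \<pi> \<Longrightarrow> v \<in> free_comp A r (\<lambda>_. 0) 0 \<Longrightarrow>
    \<pi> v = (\<Sum>j<r. actE (\<pi> (delta j)) (v j))"
proof -
  assume f: "fgdat A P actE r \<iota> \<pi>" and v: "v \<in> free_comp A r (\<lambda>_. 0) 0"
  have vj: "v j \<in> A 0" if "j < r" for j using fc_in[OF v that] by simp
  have "\<pi> v = \<pi> (\<Sum>j<r. free_act (delta j) (v j))" using fc_decomp[OF v] by simp
  also have "\<dots> = (\<Sum>j<r. \<pi> (free_act (delta j) (v j)))"
    by (rule fgd_\<pi>_sum[OF f]) (auto intro: fc_act[OF delta_mem vj])
  also have "\<dots> = (\<Sum>j<r. actE (\<pi> (delta j)) (v j))"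
    by (rule sum.cong) (auto simp: fgd_\<pi>_act[OF f delta_mem vj])
  finally show ?thesis .
qed

end

locale cohesC = cohes \<kappa> A dA M actM dM E actE \<psi>
  for \<kappa> :: "'k::comm_ring_1 \<Rightarrow> 'a::ring_1" and A dA
    and M :: "int \<Rightarrow> 'm::ab_group_add set" and actM dM
    and E :: "int \<Rightarrow> 'e::ab_group_add set" and actE \<psi> +
  fixes Bn :: nat and rk :: "int \<Rightarrow> nat" and \<iota> :: "int \<Rightarrow> 'e \<Rightarrow> nat \<Rightarrow> 'a"
    and \<pi> :: "int \<Rightarrow> (nat \<Rightarrow> 'a) \<Rightarrow> 'e"
  assumes bound: "int Bn < \<bar>p\<bar> \<Longrightarrow> E p = {0}"
    and fgd: "fgdat A (E p) actE (rk p) (\<iota> p) (\<pi> p)"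
begin

definition Rm where "Rm = (\<Sum>p\<in>{- int Bn..int Bn}. rk p)"
definition RR where "RR = (2 * Bn + 1) * Rm"
definition ss where "ss i = int (i div Rm) - int Bn"
definition jj where "jj i = i mod Rm"
definition bb where "bb i = (if jj i < rk (ss i) then \<pi> (ss i) (delta (jj i)) else 0)"
definition cc where "cc e i = (if i < RR \<and> e \<in> E (ss i) \<and> jj i < rk (ss i) then \<iota> (ss i) e (jj i) else 0)"

lemma rk_le: "\<bar>p\<bar> \<le> int Bn \<Longrightarrow> rk p \<le> Rm"
  unfolding Rm_def by (rule member_le_sum) auto

lemma ss_range: "i < RR \<Longrightarrow> \<bar>ss i\<bar> \<le> int Bn"
proof -
  assume i: "i < RR"
  have "i div Rm < 2 * Bn + 1" using i by (simp add: RR_def less_mult_imp_div_less)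
  then show ?thesis by (simp add: ss_def)
qed

lemma bb_mem: "i < RR \<Longrightarrow> bb i \<in> E (ss i)"
  by (auto simp: bb_def intro: fgd_\<pi>_mem[OF fgd delta_mem])

lemma cc_alt: "e \<in> E p \<Longrightarrow> cc e i = (if i < RR \<and> ss i = p \<and> jj i < rk p then \<iota> p e (jj i) else 0)"
proof -
  assume e: "e \<in> E p"
  show ?thesis
  proof (cases "i < RR \<and> e \<in> E (ss i) \<and> jj i < rk (ss i)")
    case True
    show ?thesis
    proof (cases "ss i = p")
      case True
      then show ?thesis using \<open>i < RR \<and> e \<in> E (ss i) \<and> jj i < rk (ss i)\<close> by (simp add: cc_def)
    next
      case False
      then have "e = 0" using E_unique[OF e] True by auto
      then show ?thesis using True False fgd_\<iota>0[OF fgd E_zero] by (auto simp: cc_def)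
    qed
  next
    case False
    then show ?thesis using e by (auto simp: cc_def)
  qed
qed

lemma cc_A0: "e \<in> E p \<Longrightarrow> cc e i \<in> A 0"
  using fc_in[OF fgd_\<iota>_mem[OF fgd], of e p "jj i" 0] by (simp add: cc_alt)

lemma cc_zero: "e \<in> E p \<Longrightarrow> RR \<le> i \<or> ss i \<noteq> p \<Longrightarrow> cc e i = 0"
  by (auto simp: cc_alt)

lemma cc_add: "e \<in> E p \<Longrightarrow> e' \<in> E p \<Longrightarrow> cc (e + e') = cc e + cc e'"
proof -
  assume e: "e \<in> E p" and e': "e' \<in> E p"
  show ?thesis
    by (auto simp: fun_eq_iff cc_alt[OF E_add[OF e e']] cc_alt[OF e] cc_alt[OF e'] fgd_\<iota>_add[OF fgd e e'])
qed

lemma cc_act: "e \<in> E p \<Longrightarrow> r \<in> A 0 \<Longrightarrow> cc (actE e r) = free_act (cc e) r"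
proof -
  assume e: "e \<in> E p" and r: "r \<in> A 0"
  show ?thesis
    by (auto simp: fun_eq_iff cc_alt[OF actE_mem[OF e r]] cc_alt[OF e] fgd_\<iota>_act[OF fgd e r] free_act_def)
qed

lemma cc_recon: "e \<in> E p \<Longrightarrow> e = (\<Sum>i\<in>{i. i < RR \<and> ss i = p}. actE (bb i) (cc e i))"
proof -
  assume e: "e \<in> E p"
  show ?thesis
  proof (cases "\<bar>p\<bar> \<le> int Bn")
    case False
    then have "e = 0" using bound[of p] e by auto
    moreover have S: "{i. i < RR \<and> ss i = p} = {}" using ss_range False by auto
    ultimately show ?thesis unfolding S by simp
  next
    case True
    define k where "k = nat (p + int Bn)"
    have kL: "k < 2 * Bn + 1" using True by (simp add: k_def)
    have rk: "rk p \<le> Rm" using rk_le[OF True] .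
    have bij: "bij_betw (\<lambda>j. k * Rm + j) {..<Rm} {i. i < RR \<and> ss i = p}"
    proof (rule bij_betw_imageI)
      show "inj_on (\<lambda>j. k * Rm + j) {..<Rm}" by (auto simp: inj_on_def)
      show "(\<lambda>j. k * Rm + j) ` {..<Rm} = {i. i < RR \<and> ss i = p}"
      proof
        show "(\<lambda>j. k * Rm + j) ` {..<Rm} \<subseteq> {i. i < RR \<and> ss i = p}"
        proof
          fix i assume "i \<in> (\<lambda>j. k * Rm + j) ` {..<Rm}"
          then obtain j where j: "j < Rm" "i = k * Rm + j" by auto
          have "k * Rm + j < (k + 1) * Rm" using j by simp
          also have "\<dots> \<le> (2 * Bn + 1) * Rm" using kL by (intro mult_right_mono) auto
          finally have "i < RR" using j by (simp add: RR_def)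
          moreover have "i div Rm = k" using j by simp
          ultimately show "i \<in> {i. i < RR \<and> ss i = p}" using True by (simp add: ss_def k_def)
        qed
        show "{i. i < RR \<and> ss i = p} \<subseteq> (\<lambda>j. k * Rm + j) ` {..<Rm}"
        proof
          fix i assume i: "i \<in> {i. i < RR \<and> ss i = p}"
          then have pos: "Rm > 0" by (cases "Rm = 0") (simp_all add: RR_def)
          have "i div Rm = k" using i by (auto simp: ss_def k_def)
          then have "i = k * Rm + i mod Rm" by (metis div_mult_mod_eq)
          moreover have "i mod Rm < Rm" using pos by simp
          ultimately show "i \<in> (\<lambda>j. k * Rm + j) ` {..<Rm}" by blast
        qed
      qed
    qed
    have idx: "ss (k * Rm + j) = p \<and> jj (k * Rm + j) = j \<and> k * Rm + j < RR" if j: "j < Rm" for j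
    proof -
      have "k * Rm + j < (k + 1) * Rm" using j by simp
      also have "\<dots> \<le> (2 * Bn + 1) * Rm" using kL by (intro mult_right_mono) auto
      finally show ?thesis using j True by (simp add: RR_def ss_def jj_def k_def)
    qed
    have "(\<Sum>i\<in>{i. i < RR \<and> ss i = p}. actE (bb i) (cc e i))
        = (\<Sum>j<Rm. actE (bb (k * Rm + j)) (cc e (k * Rm + j)))"
      using sum.reindex_bij_betw[OF bij, of "\<lambda>i. actE (bb i) (cc e i)"] by simp
    also have "\<dots> = (\<Sum>j<Rm. if j < rk p then actE (\<pi> p (delta j)) (\<iota> p e j) else 0)"
    proof (rule sum.cong)
      fix j assume "j \<in> {..<Rm}"
      then have j: "j < Rm" by simp
      show "actE (bb (k * Rm + j)) (cc e (k * Rm + j)) = (if j < rk p then actE (\<pi> p (delta j)) (\<iota> p e j) else 0)"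
        using idx[OF j] e by (auto simp: bb_def cc_alt actE_lzero)
    qed simp
    also have "\<dots> = (\<Sum>j<rk p. actE (\<pi> p (delta j)) (\<iota> p e j))"
      using rk by (intro sum.mono_neutral_cong_right) auto
    also have "\<dots> = \<pi> p (\<iota> p e)"
      using fgd_\<pi>_decomp[OF fgd fgd_\<iota>_mem[OF fgd e]] by simp
    also have "\<dots> = e" using fgd_\<pi>\<iota>[OF fgd e] .
    finally show ?thesis by simp
  qed
qed

theorem exists_retract_C: "\<exists>r s dF. retract_of_free A dA M actM dM r s dF"
proof -
  interpret cohesB \<kappa> A dA M actM dM E actE \<psi> RR ss bb cc
    by unfold_locales (fact bb_mem cc_A0 cc_zero cc_add cc_act cc_recon)+
  show ?thesis by (rule exists_retract)
qed

end

theorem main_result: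
  fixes \<kappa> :: "'k::comm_ring_1 \<Rightarrow> 'a::ring_1"
    and A :: "int \<Rightarrow> 'a set" and dA :: "'a \<Rightarrow> 'a"
    and M :: "int \<Rightarrow> 'm::ab_group_add set" and actM :: "'m \<Rightarrow> 'a \<Rightarrow> 'm" and dM :: "'m \<Rightarrow> 'm"
    and E :: "int \<Rightarrow> 'e::ab_group_add set" and actE :: "'e \<Rightarrow> 'a \<Rightarrow> 'e"
    and \<psi> :: "'e \<Rightarrow> 'a \<Rightarrow> 'm"
  assumes "dg_algebra \<kappa> A dA"
    and "dg_rmodule A dA M actM dM"
    and "cohesive_via A M actM E actE \<psi>"
  shows "\<exists>r s dF. retract_of_free A dA M actM dM r s dF"
proof -
  interpret cohes \<kappa> A dA M actM dM E actE \<psi>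
    using assms by (simp add: cohes_def dgmod_def dga_def dgmod_axioms_def cohes_axioms_def)
  obtain Bd where Bd: "\<forall>p. Bd < \<bar>p\<bar> \<longrightarrow> E p = {0}"
    using coh by (auto simp: cohesive_via_def bounded_graded_def)
  have "\<forall>p. \<exists>t. fgdat A (E p) actE (fst t) (fst (snd t)) (snd (snd t))"
  proof
    fix p
    have "fg_projective A (E p) actE" using coh by (simp add: cohesive_via_def)
    then obtain r i q where "fgdat A (E p) actE r i q" by (auto simp: fg_projective_iff)
    then show "\<exists>t. fgdat A (E p) actE (fst t) (fst (snd t)) (snd (snd t))"
      by (intro exI[of _ "(r, i, q)"]) simp
  qed
  then obtain T where T: "\<forall>p. fgdat A (E p) actE (fst (T p)) (fst (snd (T p))) (snd (snd (T p)))"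
    by (metis choice)
  interpret cohesC \<kappa> A dA M actM dM E actE \<psi> "nat Bd" "\<lambda>p. fst (T p)" "\<lambda>p. fst (snd (T p))" "\<lambda>p. snd (snd (T p))"
  proof
    fix p :: int
    assume "int (nat Bd) < \<bar>p\<bar>"
    then have "Bd < \<bar>p\<bar>" by (cases "0 \<le> Bd") auto
    then show "E p = {0}" using Bd by blast
  next
    fix p show "fgdat A (E p) actE (fst (T p)) (fst (snd (T p))) (snd (snd (T p)))" using T by blast
  qed
  show ?thesis by (rule exists_retract_C)
qed


theorem proposition3p2:
  fixes \<kappa> :: "'k::comm_ring_1 \<Rightarrow> 'a::ring_1"
    and A :: "int \<Rightarrow> 'a set" and dA :: "'a \<Rightarrow> 'a"
    and M :: "int \<Rightarrow> 'm::ab_group_add set" and actM :: "'m \<Rightarrow> 'a \<Rightarrow> 'm" and dM :: "'m \<Rightarrow> 'm"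
    and E :: "int \<Rightarrow> 'e::ab_group_add set" and actE :: "'e \<Rightarrow> 'a \<Rightarrow> 'e"
    and \<psi> :: "'e \<Rightarrow> 'a \<Rightarrow> 'm"
  assumes "dg_algebra \<kappa> A dA"
    and "dg_rmodule A dA M actM dM"
    and "cohesive_via A M actM E actE \<psi>"
  shows "\<exists>r s dF. retract_of_free A dA M actM dM r s dF"
  by (rule main_result[OF assms])

end
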